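(* Let $G$ be a connected graph of order $n$ with $\alpha(G)=n-2$. Then $m_G[0,n-\alpha(G)]=\alpha(G)$ (i.e. $m_G[0,2]=n-2$) if and only if $G$ is isomorphic to one of the following, where $p\ge r\ge 0$ and $q\ge 0$ are integers with $n=p+q+r+2$: (1) $B(p,q,r)$ with $q\ge 1$ and $p+q+r\ge 3$; (2) $B'(p,0,r)$ with $pr\ge 2$; (3) $B'(p,q,r)$ with $q\ge 1$.
   Context: Graphs are finite and simple; $\alpha(G)$ is the independence number. $L(G)=D(G)-A(G)$ is the Laplacian matrix; for an interval $I$, $m_G I$ is the number of Laplacian eigenvalues of $G$ (with multiplicity) in $I$. For integers $p,q,r\ge 0$, the binary star graph $B(p,q,r)$ is the simple graph on $p+q+r+2$ vertices $u,v,w_1,\dots,w_q,u_1,\dots,u_p,v_1,\dots,v_r$ whose edges are $uw_i$ and $vw_i$ for $1\le i\le q$, $uu_j$ for $1\le j\le p$, and $vv_k$ for $1\le k\le r$ (so $u,v$ nonadjacent). $B'(p,q,r)$ is obtained from $B(p,q,r)$ by adding the edge $uv$. The convention $p\ge r$ is imposed (the graphs are symmetric in $p$ and $r$). *)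

theory Defs
  imports "Jordan_Normal_Form.Char_Poly"
begin

definition sgraph :: "nat \<Rightarrow> (nat \<Rightarrow> nat \<Rightarrow> bool) \<Rightarrow> bool" where
  "sgraph n A \<longleftrightarrow> (\<forall>i j. A i j \<longrightarrow> i < n \<and> j < n) \<and> (\<forall>i j. A i j \<longrightarrow> A j i) \<and> (\<forall>i. \<not> A i i)"

definition connected_graph :: "nat \<Rightarrow> (nat \<Rightarrow> nat \<Rightarrow> bool) \<Rightarrow> bool" where
  "connected_graph n A \<longleftrightarrow> (\<forall>i<n. \<forall>j<n. A\<^sup>*\<^sup>* i j)"

definition independent_set :: "nat \<Rightarrow> (nat \<Rightarrow> nat \<Rightarrow> bool) \<Rightarrow> nat set \<Rightarrow> bool" where
  "independent_set n A S \<longleftrightarrow> S \<subseteq> {..<n} \<and> (\<forall>x\<in>S. \<forall>y\<in>S. \<not> A x y)"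

definition indep_num :: "nat \<Rightarrow> (nat \<Rightarrow> nat \<Rightarrow> bool) \<Rightarrow> nat" where
  "indep_num n A = Max {card S | S. independent_set n A S}"

definition degree :: "nat \<Rightarrow> (nat \<Rightarrow> nat \<Rightarrow> bool) \<Rightarrow> nat \<Rightarrow> nat" where
  "degree n A i = card {k. k < n \<and> A i k}"

definition laplacian :: "nat \<Rightarrow> (nat \<Rightarrow> nat \<Rightarrow> bool) \<Rightarrow> real mat" where
  "laplacian n A = mat n n (\<lambda>(i, j). (if i = j then real (degree n A i) else 0) - (if A i j then 1 else 0))"

definition lap_mult_closed :: "nat \<Rightarrow> (nat \<Rightarrow> nat \<Rightarrow> bool) \<Rightarrow> real \<Rightarrow> real \<Rightarrow> nat" where
  "lap_mult_closed n A a b =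
     (\<Sum>x\<in>{x. poly (char_poly (laplacian n A)) x = 0 \<and> a \<le> x \<and> x \<le> b}.
        order x (char_poly (laplacian n A)))"

definition graph_iso :: "nat \<Rightarrow> (nat \<Rightarrow> nat \<Rightarrow> bool) \<Rightarrow> (nat \<Rightarrow> nat \<Rightarrow> bool) \<Rightarrow> bool" where
  "graph_iso n A B \<longleftrightarrow> (\<exists>f. bij_betw f {..<n} {..<n} \<and> (\<forall>i<n. \<forall>j<n. A i j \<longleftrightarrow> B (f i) (f j)))"

text \<open>Binary star: u = 0, v = 1, w_1..w_q = 2..q+1, u_1..u_p = q+2..q+p+1,
  v_1..v_r = q+p+2..q+p+r+1. If c then the edge uv is added (B'(p,q,r)).\<close>
definition bstar_dir :: "nat \<Rightarrow> nat \<Rightarrow> nat \<Rightarrow> bool \<Rightarrow> nat \<Rightarrow> nat \<Rightarrow> bool" where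
  "bstar_dir p q r c x y \<longleftrightarrow>
     (x = 0 \<and> 2 \<le> y \<and> y < q + 2) \<or>
     (x = 1 \<and> 2 \<le> y \<and> y < q + 2) \<or>
     (x = 0 \<and> q + 2 \<le> y \<and> y < q + p + 2) \<or>
     (x = 1 \<and> q + p + 2 \<le> y \<and> y < q + p + r + 2) \<or>
     (c \<and> x = 0 \<and> y = 1)"

definition binary_star :: "nat \<Rightarrow> nat \<Rightarrow> nat \<Rightarrow> bool \<Rightarrow> nat \<Rightarrow> nat \<Rightarrow> bool" where
  "binary_star p q r c x y \<longleftrightarrow> bstar_dir p q r c x y \<or> bstar_dir p q r c y x"

end

theory Submission
  imports Defs
begin

lemma det2: "det (mat 2 2 f :: 'a :: comm_ring_1 mat) = f (0,0) * f (1,1) - f (0,1) * f (1,0)"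
proof -
  have "det (mat 2 2 f) = (\<Sum>j<2. mat 2 2 f $$ (0,j) * cofactor (mat 2 2 f) 0 j)"
    by (rule laplace_expansion_row) auto
  also have "\<dots> = f (0,0) * f (1,1) - f (0,1) * f (1,0)"
    by (simp add: cofactor_def mat_delete_def det_single numeral_2_eq_2 lessThan_Suc)
  finally show ?thesis .
qed

lemma schur2:
  fixes M :: "real mat" and m :: nat
  assumes M: "M \<in> carrier_mat (2+m) (2+m)"
  and offd: "\<And>i j. 2 \<le> i \<Longrightarrow> 2 \<le> j \<Longrightarrow> i < 2+m \<Longrightarrow> j < 2+m \<Longrightarrow> i \<noteq> j \<Longrightarrow> M $$ (i,j) = 0"
  and nz: "\<And>i. 2 \<le> i \<Longrightarrow> i < 2+m \<Longrightarrow> M $$ (i,i) \<noteq> 0"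
  shows "det M = (\<Prod>k<m. M$$(k+2,k+2)) *
     ((M$$(0,0) - (\<Sum>k<m. M$$(0,k+2) * M$$(k+2,0) / M$$(k+2,k+2))) *
      (M$$(1,1) - (\<Sum>k<m. M$$(1,k+2) * M$$(k+2,1) / M$$(k+2,k+2))) -
      (M$$(0,1) - (\<Sum>k<m. M$$(0,k+2) * M$$(k+2,1) / M$$(k+2,k+2))) *
      (M$$(1,0) - (\<Sum>k<m. M$$(1,k+2) * M$$(k+2,0) / M$$(k+2,k+2))))"
proof -
  define A where "A = mat 2 2 (\<lambda>(i,j). M$$(i,j))"
  define B where "B = mat 2 m (\<lambda>(i,j). M$$(i,j+2))"
  define C where "C = mat m 2 (\<lambda>(i,j). M$$(i+2,j))"
  define D where "D = mat m m (\<lambda>(i,j). M$$(i+2,j+2))"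
  define E where "E = mat m 2 (\<lambda>(k,j). - M$$(k+2,j) / M$$(k+2,k+2))"
  define N where "N = four_block_mat (1\<^sub>m 2) (0\<^sub>m 2 m) E (1\<^sub>m m)"
  have cA: "A \<in> carrier_mat 2 2" and cB: "B \<in> carrier_mat 2 m" and cC: "C \<in> carrier_mat m 2"
    and cD: "D \<in> carrier_mat m m" and cE: "E \<in> carrier_mat m 2"
    by (auto simp: A_def B_def C_def D_def E_def)
  have ss: "\<And>i. \<not> i < 2 \<Longrightarrow> Suc (Suc (i - 2)) = i" by arith
  have MB: "M = four_block_mat A B C D"
    by (rule eq_matI, insert M, auto simp: A_def B_def C_def D_def ss)
  have cN: "N \<in> carrier_mat (2+m) (2+m)" unfolding N_def using cE by auto
  have detN: "det N = 1" unfolding N_def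
    by (subst det_four_block_mat_upper_right_zero[of _ 2 _ m]) (use cE in auto)
  have CDE: "C * 1\<^sub>m 2 + D * E = 0\<^sub>m m 2"
  proof (rule eq_matI)
    fix i j assume i: "i < dim_row (0\<^sub>m m 2 :: real mat)" and j: "j < dim_col (0\<^sub>m m 2 :: real mat)"
    hence i: "i < m" and j: "j < 2" by auto
    have "(D * E) $$ (i,j) = (\<Sum>k<m. D $$ (i,k) * E $$ (k,j))"
      using i j cD cE by (simp add: scalar_prod_def lessThan_atLeast0)
    also have "\<dots> = (\<Sum>k<m. if k = i then D $$ (i,i) * E $$ (i,j) else 0)"
      by (rule sum.cong, simp, use i offd in \<open>auto simp: D_def\<close>)
    also have "\<dots> = D $$ (i,i) * E $$ (i,j)" using i by simp
    also have "\<dots> = - M $$ (i+2,j)" using i j nz[of "i+2"] by (simp add: D_def E_def)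
    finally show "(C * 1\<^sub>m 2 + D * E) $$ (i,j) = 0\<^sub>m m 2 $$ (i,j)"
      using i j cC cD cE by (simp add: C_def)
  qed (use cC cD cE in auto)
  have MN: "M * N = four_block_mat (A + B * E) B (0\<^sub>m m 2) D"
    unfolding MB N_def
    by (subst mult_four_block_mat[OF cA cB cC cD one_carrier_mat zero_carrier_mat cE one_carrier_mat])
       (use cA cB cC cD cE CDE in auto)
  have "det M = det (M * N)" using det_mult[OF M cN] detN by simp
  also have "\<dots> = det (A + B * E) * det D"
    unfolding MN by (rule det_four_block_mat_lower_left_zero) (use cA cB cD cE in auto)
  finally have dM: "det M = det (A + B * E) * det D" .
  have "det D = prod_list (diag_mat D)"
    by (rule det_upper_triangular[OF _ cD]) (use offd in \<open>auto simp: D_def upper_triangular_def\<close>)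
  also have "\<dots> = (\<Prod>k<m. M$$(k+2,k+2))"
    unfolding prod_list_diag_prod using cD by (simp add: D_def lessThan_atLeast0)
  finally have dD: "det D = (\<Prod>k<m. M$$(k+2,k+2))" .
  have BE: "\<And>i j. i < 2 \<Longrightarrow> j < 2 \<Longrightarrow> (A + B * E) $$ (i,j) = M$$(i,j) - (\<Sum>k<m. M$$(i,k+2) * M$$(k+2,j) / M$$(k+2,k+2))"
  proof -
    fix i j :: nat assume i: "i < 2" and j: "j < 2"
    have "(B * E) $$ (i,j) = (\<Sum>k<m. B $$ (i,k) * E $$ (k,j))"
      using i j cB cE by (simp add: scalar_prod_def lessThan_atLeast0)
    also have "\<dots> = - (\<Sum>k<m. M$$(i,k+2) * M$$(k+2,j) / M$$(k+2,k+2))"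
      by (simp add: B_def E_def i j sum_negf[symmetric])
    finally show "(A + B * E) $$ (i,j) = M$$(i,j) - (\<Sum>k<m. M$$(i,k+2) * M$$(k+2,j) / M$$(k+2,k+2))"
      using i j cA cB cE by (simp add: A_def)
  qed
  have "A + B * E = mat 2 2 (\<lambda>(i,j). (A + B * E) $$ (i,j))"
    by (rule eq_matI) (use cA cB cE in auto)
  hence "det (A + B * E) = (A + B * E) $$ (0,0) * (A + B * E) $$ (1,1) - (A + B * E) $$ (0,1) * (A + B * E) $$ (1,0)"
    using det2 by (metis (no_types, lifting) case_prod_conv)
  then show ?thesis unfolding dM dD using BE by simp
qed

definition Hp :: "real \<Rightarrow> real \<Rightarrow> real \<Rightarrow> real \<Rightarrow> real poly" where
  "Hp p q r c = [: (q + 2*c)*(p+q+r+2),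
     -(2 + 2*p + 6*q + 2*r + 10*c + 2*p*r + 2*p*q + 3*p*c + 2*q*r + 2*q^2 + 4*q*c + 3*r*c),
     5 + 3*p + 6*q + 3*r + 8*c + p*r + p*q + p*c + q*r + q^2 + 2*q*c + r*c,
     -(4 + p + 2*q + r + 2*c), 1 :]"

lemma Sid0:
  fixes t u v w c :: real
  shows "((t - (v*(t-1)+u*(t-2)+c) - (u + v)) * (t - (w*(t-1)+u*(t-2)+c) - (u+w)) - (c - u) * (c - u)) * ((t-1)^2*(t-2)) = t * poly (Hp (v*(t-1)) (u*(t-2)) (w*(t-1)) c) t"
  unfolding Hp_def by (simp add: algebra_simps power2_eq_square)

lemma Sid:
  fixes t p q r c :: real
  assumes "t \<noteq> 1" "t \<noteq> 2"
  shows "((t - (p+q+c) - (q/(t-2) + p/(t-1))) * (t - (r+q+c) - (q/(t-2)+r/(t-1))) - (c - q/(t-2)) * (c - q/(t-2))) * ((t-1)^2*(t-2)) = t * poly (Hp p q r c) t"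
proof -
  have a: "t - 1 \<noteq> 0" "t - 2 \<noteq> 0" using assms by auto
  have e: "p = (p/(t-1))*(t-1)" "q = (q/(t-2))*(t-2)" "r = (r/(t-1))*(t-1)" using a by auto
  have "t * poly (Hp p q r c) t = t * poly (Hp ((p/(t-1))*(t-1)) ((q/(t-2))*(t-2)) ((r/(t-1))*(t-1)) c) t"
    using e by metis
  also have "\<dots> = ((t - ((p/(t-1))*(t-1)+(q/(t-2))*(t-2)+c) - (q/(t-2) + p/(t-1))) * (t - ((r/(t-1))*(t-1)+(q/(t-2))*(t-2)+c) - (q/(t-2)+r/(t-1))) - (c - q/(t-2)) * (c - q/(t-2))) * ((t-1)^2*(t-2))"
    by (rule Sid0[symmetric])
  finally show ?thesis using e by metis
qed

lemma bs0: "binary_star p q r c 0 y \<longleftrightarrow> (2 \<le> y \<and> y < q+p+2) \<or> (c \<and> y = 1)"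
  by (auto simp: binary_star_def bstar_dir_def)
lemma bs1: "binary_star p q r c 1 y \<longleftrightarrow> (2 \<le> y \<and> y < q+2) \<or> (q+p+2 \<le> y \<and> y < q+p+r+2) \<or> (c \<and> y = 0)"
  by (auto simp: binary_star_def bstar_dir_def)
lemma bs1': "binary_star p q r c (Suc 0) y \<longleftrightarrow> (2 \<le> y \<and> y < q+2) \<or> (q+p+2 \<le> y \<and> y < q+p+r+2) \<or> (c \<and> y = 0)"
  using bs1 by simp
lemma bsge: "2 \<le> x \<Longrightarrow> binary_star p q r c x y \<longleftrightarrow> (y = 0 \<and> x < q+p+2) \<or> (y = 1 \<and> (x < q+2 \<or> (q+p+2 \<le> x \<and> x < q+p+r+2)))"
  by (auto simp: binary_star_def bstar_dir_def)
lemma bs_irrefl: "\<not> binary_star p q r c x x"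
  by (auto simp: binary_star_def bstar_dir_def)
lemma bs_sym: "binary_star p q r c x y = binary_star p q r c y x"
  by (auto simp: binary_star_def)

lemma deg0: "n = p+q+r+2 \<Longrightarrow> degree n (binary_star p q r c) 0 = q + p + (if c then 1 else 0)"
proof -
  assume n: "n = p+q+r+2"
  have "{k. k < n \<and> binary_star p q r c 0 k} = {2..<q+p+2} \<union> (if c then {1} else {})"
    using n by (auto simp: bs0)
  thus ?thesis unfolding degree_def by auto
qed
lemma deg1: "n = p+q+r+2 \<Longrightarrow> degree n (binary_star p q r c) 1 = q + r + (if c then 1 else 0)"
proof -
  assume n: "n = p+q+r+2"
  have "{k. k < n \<and> binary_star p q r c 1 k} = {2..<q+2} \<union> {q+p+2..<q+p+r+2} \<union> (if c then {0} else {})"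
    using n by (auto simp: bs1 bs1[unfolded One_nat_def])
  moreover have "card ({2..<q+2} \<union> {q+p+2..<q+p+r+2}) = q + r"
    by (subst card_Un_disjoint) auto
  ultimately show ?thesis unfolding degree_def by auto
qed
lemma degW: "n = p+q+r+2 \<Longrightarrow> 2 \<le> x \<Longrightarrow> x < q+2 \<Longrightarrow> degree n (binary_star p q r c) x = 2"
proof -
  assume n: "n = p+q+r+2" and x: "2 \<le> x" "x < q+2"
  have "{k. k < n \<and> binary_star p q r c x k} = {0,1}"
    using n x by (auto simp: bsge)
  thus ?thesis unfolding degree_def by auto
qed
lemma degP: "n = p+q+r+2 \<Longrightarrow> q+2 \<le> x \<Longrightarrow> x < n \<Longrightarrow> degree n (binary_star p q r c) x = 1"
proof -
  assume n: "n = p+q+r+2" and x: "q+2 \<le> x" "x < n"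
  have "{k. k < n \<and> binary_star p q r c x k} = (if x < q+p+2 then {0} else {1})"
    using n x by (auto simp: bsge)
  thus ?thesis unfolding degree_def by auto
qed

lemma lap_carrier: "laplacian n A \<in> carrier_mat n n"
  unfolding laplacian_def by auto

lemma Ment: "i < n \<Longrightarrow> j < n \<Longrightarrow> \<not> A i i \<Longrightarrow> (-(char_matrix (laplacian n A) t)) $$ (i,j) =
   (if i = j then t - real (degree n A i) else 0) + (if A i j then 1 else 0)"
  by (auto simp: char_matrix_def laplacian_def)

lemma sum_split: "(\<Sum>k<a+(b::nat). g k) = (\<Sum>k<a. g k) + (\<Sum>k<b. g (a+k))"
  by (induction b) (auto simp: add.assoc)
lemma prod_split: "(\<Prod>k<a+(b::nat). g k) = (\<Prod>k<a. g k) * (\<Prod>k<b. g (a+k))"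
  by (induction b) (auto simp: mult.assoc)

lemma char_eval:
  fixes p q r :: nat and c :: bool and t :: real
  assumes n: "n = p+q+r+2" and t: "t \<noteq> 1" "t \<noteq> 2"
  shows "poly (char_poly (laplacian n (binary_star p q r c))) t * ((t-1)^2*(t-2)) =
     t * (t-1)^(p+r) * (t-2)^q * poly (Hp (real p) (real q) (real r) (if c then 1 else 0)) t"
proof -
  define A where "A = binary_star p q r c"
  define M where "M = -(char_matrix (laplacian n A) t)"
  define cc :: real where "cc = (if c then 1 else 0)"
  define m where "m = q + p + r"
  have nm: "n = 2 + m" using n m_def by simp
  have "laplacian n A \<in> carrier_mat n n" by (rule lap_carrier)
  hence cM: "M \<in> carrier_mat (2+m) (2+m)" unfolding M_def char_matrix_def nm by auto
  have n0: "0 < n" "1 < n" "Suc 0 < n" using n by auto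
  have ME: "\<And>i j. i < n \<Longrightarrow> j < n \<Longrightarrow> M $$ (i,j) =
     (if i = j then t - real (degree n A i) else 0) + (if A i j then 1 else 0)"
    unfolding M_def A_def by (rule Ment) (auto simp: bs_irrefl)
  have diag: "\<And>k. k < m \<Longrightarrow> M $$ (Suc (Suc k),Suc (Suc k)) = (if k < q then t - 2 else t - 1)"
  proof -
    fix k assume k: "k < m"
    show "M $$ (Suc (Suc k),Suc (Suc k)) = (if k < q then t - 2 else t - 1)"
      using k n degW[OF n, of "k+2" c] degP[OF n, of "k+2" c] unfolding m_def
      by (subst ME) (auto simp: A_def bs_irrefl)
  qed
  have offd: "\<And>i j. 2 \<le> i \<Longrightarrow> 2 \<le> j \<Longrightarrow> i < 2+m \<Longrightarrow> j < 2+m \<Longrightarrow> i \<noteq> j \<Longrightarrow> M $$ (i,j) = 0"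
    using nm by (subst ME) (auto simp: A_def bsge)
  have nz: "\<And>i. 2 \<le> i \<Longrightarrow> i < 2+m \<Longrightarrow> M $$ (i,i) \<noteq> 0"
  proof -
    fix i assume i: "2 \<le> i" "i < 2+m"
    then obtain k where k: "i = k+2" "k < m" by (metis add.commute le_Suc_ex less_diff_conv2 ordered_cancel_comm_monoid_diff_class.add_diff_inverse)
    show "M $$ (i,i) \<noteq> 0" using diag[OF k(2)] t k by (auto simp: numeral_2_eq_2)
  qed
  have e0k: "\<And>k. k < m \<Longrightarrow> M $$ (0,Suc (Suc k)) = (if k < q+p then 1 else 0)"
    using nm by (subst ME) (auto simp: A_def bs0)
  have ek0: "\<And>k. k < m \<Longrightarrow> M $$ (Suc (Suc k),0) = (if k < q+p then 1 else 0)"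
    using nm by (subst ME) (auto simp: A_def bsge)
  have e1k: "\<And>k. k < m \<Longrightarrow> M $$ (Suc 0,Suc (Suc k)) = (if k < q \<or> q+p \<le> k then 1 else 0)"
    using nm unfolding m_def by (subst ME) (auto simp: A_def bs1')
  have ek1: "\<And>k. k < m \<Longrightarrow> M $$ (Suc (Suc k),Suc 0) = (if k < q \<or> q+p \<le> k then 1 else 0)"
    using nm unfolding m_def by (subst ME) (auto simp: A_def bsge)
  have e00: "M $$ (0,0) = t - (q + p + cc)"
    using n0 by (subst ME) (auto simp: A_def deg0[OF n] cc_def bs_irrefl)
  have e11: "M $$ (1,1) = t - (q + r + cc)"
    using n0 by (subst ME) (auto simp: A_def deg1[OF n] deg1[OF n, unfolded One_nat_def] cc_def bs_irrefl)
  have e01: "M $$ (0,1) = cc"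
    using n0 by (subst ME) (auto simp: A_def cc_def bs0)
  have e10: "M $$ (1,0) = cc"
    using n0 by (subst ME) (auto simp: A_def cc_def bs1' bs_irrefl)
  have s00: "(\<Sum>k<m. M$$(0,k+2) * M$$(k+2,0) / M$$(k+2,k+2)) = q/(t-2) + p/(t-1)"
  proof -
    have "(\<Sum>k<m. M$$(0,k+2) * M$$(k+2,0) / M$$(k+2,k+2)) =
          (\<Sum>k<q+p+r. if k < q then 1/(t-2) else if k < q+p then 1/(t-1) else 0)"
      unfolding m_def by (rule sum.cong) (auto simp: e0k ek0 diag m_def)
    also have "\<dots> = q/(t-2) + p/(t-1)" by (simp add: sum_split)
    finally show ?thesis .
  qed
  have s11: "(\<Sum>k<m. M$$(1,k+2) * M$$(k+2,1) / M$$(k+2,k+2)) = q/(t-2) + r/(t-1)"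
  proof -
    have "(\<Sum>k<m. M$$(1,k+2) * M$$(k+2,1) / M$$(k+2,k+2)) =
          (\<Sum>k<q+p+r. if k < q then 1/(t-2) else if k < q+p then 0 else 1/(t-1))"
      unfolding m_def by (rule sum.cong) (auto simp: e1k ek1 diag m_def)
    also have "\<dots> = q/(t-2) + r/(t-1)" by (simp add: sum_split)
    finally show ?thesis .
  qed
  have s01: "(\<Sum>k<m. M$$(0,k+2) * M$$(k+2,1) / M$$(k+2,k+2)) = q/(t-2)"
  proof -
    have "(\<Sum>k<m. M$$(0,k+2) * M$$(k+2,1) / M$$(k+2,k+2)) =
          (\<Sum>k<q+p+r. if k < q then 1/(t-2) else 0)"
      unfolding m_def by (rule sum.cong) (auto simp: e0k ek1 diag m_def)
    also have "\<dots> = q/(t-2)" by (simp add: sum_split)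
    finally show ?thesis .
  qed
  have s10: "(\<Sum>k<m. M$$(1,k+2) * M$$(k+2,0) / M$$(k+2,k+2)) = q/(t-2)"
  proof -
    have "(\<Sum>k<m. M$$(1,k+2) * M$$(k+2,0) / M$$(k+2,k+2)) =
          (\<Sum>k<q+p+r. if k < q then 1/(t-2) else 0)"
      unfolding m_def by (rule sum.cong) (auto simp: e1k ek0 diag m_def)
    also have "\<dots> = q/(t-2)" by (simp add: sum_split)
    finally show ?thesis .
  qed
  have pr: "(\<Prod>k<m. M$$(k+2,k+2)) = (t-2)^q * (t-1)^(p+r)"
  proof -
    have "(\<Prod>k<m. M$$(k+2,k+2)) = (\<Prod>k<q+(p+r). if k < q then t-2 else t-1)"
      unfolding m_def by (rule prod.cong) (auto simp: diag m_def)
    also have "\<dots> = (t-2)^q * (t-1)^(p+r)" by (simp add: prod_split)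
    finally show ?thesis .
  qed
  have "poly (char_poly (laplacian n A)) t = det M"
    unfolding M_def by (rule char_poly_matrix[OF lap_carrier])
  also have "\<dots> = (t-2)^q * (t-1)^(p+r) *
     ((t - (p+q+cc) - (q/(t-2) + p/(t-1))) * (t - (r+q+cc) - (q/(t-2)+r/(t-1))) - (cc - q/(t-2)) * (cc - q/(t-2)))"
    apply (subst schur2[OF cM offd nz], assumption+)
    unfolding s00 s11 s01 s10 pr e00 e11 e01 e10 by (simp add: algebra_simps)
  finally have "poly (char_poly (laplacian n A)) t * ((t-1)^2*(t-2)) = (t-2)^q * (t-1)^(p+r) * (t * poly (Hp p q r cc) t)"
    using Sid[OF t, of p q cc r] by (simp add: mult.assoc)
  thus ?thesis unfolding A_def cc_def by (simp add: algebra_simps)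
qed

lemma poly_eq_cofinite:
  fixes f g :: "real poly"
  assumes "finite F" "\<And>t. t \<notin> F \<Longrightarrow> poly f t = poly g t"
  shows "f = g"
proof (rule ccontr)
  assume "f \<noteq> g"
  hence "f - g \<noteq> 0" by simp
  hence fin: "finite {t. poly (f - g) t = 0}" by (rule poly_roots_finite)
  have "UNIV - F \<subseteq> {t. poly (f - g) t = 0}" using assms(2) by auto
  hence "finite (UNIV - F :: real set)" using fin finite_subset by blast
  hence "finite (UNIV :: real set)" using assms(1) by (metis Diff_partition finite_Un subset_UNIV)
  thus False using infinite_UNIV_char_0 by blast
qed

lemma char_id:
  fixes p q r :: nat and c :: bool
  assumes n: "n = p+q+r+2"
  shows "char_poly (laplacian n (binary_star p q r c)) * ([:-1,1:]^2 * [:-2,1:]) =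
     [:0,1:] * [:-1,1:]^(p+r) * [:-2,1:]^q * Hp (real p) (real q) (real r) (if c then 1 else 0)"
proof (rule poly_eq_cofinite[of "{1,2}"])
  fix t :: real assume "t \<notin> {1,2}"
  hence t: "t \<noteq> 1" "t \<noteq> 2" by auto
  show "poly (char_poly (laplacian n (binary_star p q r c)) * ([:-1,1:]^2 * [:-2,1:])) t =
        poly ([:0,1:] * [:-1,1:]^(p+r) * [:-2,1:]^q * Hp (real p) (real q) (real r) (if c then 1 else 0)) t"
    using char_eval[OF n t, of c] by (simp add: algebra_simps)
qed simp

definition cnt :: "real poly \<Rightarrow> nat" where
  "cnt f = size (filter_mset (\<lambda>x. 0 \<le> x \<and> x \<le> 2) (proots f))"

lemma char_nz: "char_poly (laplacian n A) \<noteq> 0"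
proof -
  have "coeff (char_poly (laplacian n A)) n = 1"
    using degree_monic_char_poly[OF lap_carrier] by simp
  thus ?thesis by auto
qed

lemma sum_order_cnt:
  fixes f :: "real poly"
  assumes f: "f \<noteq> 0"
  shows "(\<Sum>x\<in>{x. poly f x = 0 \<and> 0 \<le> x \<and> x \<le> 2}. order x f) = cnt f"
proof -
  let ?M = "filter_mset (\<lambda>x. 0 \<le> x \<and> x \<le> 2) (proots f)"
  have s: "set_mset ?M = {x. poly f x = 0 \<and> 0 \<le> x \<and> x \<le> 2}" using f by auto
  have "size ?M = (\<Sum>x\<in>set_mset ?M. count ?M x)" by (rule size_multiset_overloaded_eq)
  also have "\<dots> = (\<Sum>x\<in>{x. poly f x = 0 \<and> 0 \<le> x \<and> x \<le> 2}. order x f)"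
    unfolding s by (rule sum.cong) (use f in auto)
  finally show ?thesis unfolding cnt_def by simp
qed

lemma lap_cnt: "lap_mult_closed n A 0 2 = cnt (char_poly (laplacian n A))"
  unfolding lap_mult_closed_def using sum_order_cnt[OF char_nz] by simp

lemma cnt_mult: "f \<noteq> 0 \<Longrightarrow> g \<noteq> 0 \<Longrightarrow> cnt (f * g) = cnt f + cnt g"
  unfolding cnt_def by (simp add: proots_mult)

lemma cnt_pow: "f \<noteq> 0 \<Longrightarrow> cnt (f ^ k) = k * cnt f"
proof (induction k)
  case 0 show ?case by (simp add: cnt_def)
next
  case (Suc k)
  have "f ^ k \<noteq> 0" using Suc.prems by simp
  thus ?case using Suc by (simp add: cnt_mult)
qed

lemma cnt_lin: "cnt [:-a,1:] = (if 0 \<le> a \<and> a \<le> 2 then 1 else 0)"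
proof -
  have "proots [:-a,1:] = {#a#}" using proots_linear_factor[of "-a"] by simp
  thus ?thesis unfolding cnt_def by simp
qed

lemma Hp_nz: "Hp p q r c \<noteq> 0"
  unfolding Hp_def by simp

lemma lap_bs_cnt:
  fixes p q r :: nat and c :: bool
  assumes n: "n = p+q+r+2"
  shows "lap_mult_closed n (binary_star p q r c) 0 2 + 3 = n - 1 + cnt (Hp (real p) (real q) (real r) (if c then 1 else 0))"
proof -
  let ?T = "char_poly (laplacian n (binary_star p q r c))"
  let ?H = "Hp (real p) (real q) (real r) (if c then 1 else 0)"
  have l1: "[:-1,1:] \<noteq> (0::real poly)" "[:-2,1:] \<noteq> (0::real poly)" "[:0,1:] \<noteq> (0::real poly)" by auto
  have c1: "cnt [:-1,1:] = 1" "cnt [:-2,1:] = 1" "cnt [:0,1:] = 1"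
    using cnt_lin[of 1] cnt_lin[of 2] cnt_lin[of 0] by auto
  have nz2: "[:-1,1:]^2 \<noteq> (0::real poly)" "[:-1,1:]^(p+r) \<noteq> (0::real poly)" "[:-2,1:]^q \<noteq> (0::real poly)"
    using l1 by auto
  have nz3: "[:-1,1:]^2 * [:-2,1:] \<noteq> (0::real poly)" "[:0,1:] * [:-1,1:]^(p+r) \<noteq> (0::real poly)"
     "[:0,1:] * [:-1,1:]^(p+r) * [:-2,1:]^q \<noteq> (0::real poly)"
    by (intro no_zero_divisors power_not_zero l1)+
  have "cnt (?T * ([:-1,1:]^2 * [:-2,1:])) = cnt ?T + (cnt ([:-1,1:]^2) + cnt [:-2,1:])"
    using cnt_mult[OF char_nz nz3(1)] cnt_mult[OF nz2(1) l1(2)] by simp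
  also have "\<dots> = cnt ?T + 3" using cnt_pow[OF l1(1), of 2] c1 by simp
  finally have A: "cnt (?T * ([:-1,1:]^2 * [:-2,1:])) = cnt ?T + 3" .
  have "cnt ([:0,1:] * [:-1,1:]^(p+r) * [:-2,1:]^q * ?H) = cnt [:0,1:] + cnt ([:-1,1:]^(p+r)) + cnt ([:-2,1:]^q) + cnt ?H"
    using cnt_mult[OF nz3(3) Hp_nz] cnt_mult[OF nz3(2) nz2(3)] cnt_mult[OF l1(3) nz2(2)] by simp
  also have "\<dots> = 1 + (p+r) + q + cnt ?H" using cnt_pow[OF l1(1)] cnt_pow[OF l1(2)] c1 by simp
  finally have B: "cnt ([:0,1:] * [:-1,1:]^(p+r) * [:-2,1:]^q * ?H) = 1 + (p+r) + q + cnt ?H" .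
  have "cnt ?T + 3 = 1 + (p+r) + q + cnt ?H" using A B char_id[OF n, of c] by metis
  thus ?thesis using lap_cnt[of n "binary_star p q r c"] n by simp
qed

lemma card_le_size: "card (set_mset M) \<le> size M"
proof -
  have "card (set_mset M) = (\<Sum>x\<in>set_mset M. 1)" by simp
  also have "\<dots> \<le> (\<Sum>x\<in>set_mset M. count M x)" by (rule sum_mono) auto
  also have "\<dots> = size M" by (rule size_multiset_overloaded_eq[symmetric])
  finally show ?thesis .
qed

lemma card_le_filter:
  assumes "f \<noteq> 0" "finite S" "S \<subseteq> {x. poly f x = 0 \<and> P x}"
  shows "card S \<le> size (filter_mset P (proots f))"
proof -
  have "S \<subseteq> set_mset (filter_mset P (proots f))" using assms by auto
  hence "card S \<le> card (set_mset (filter_mset P (proots f)))" by (intro card_mono) auto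
  also have "\<dots> \<le> size (filter_mset P (proots f))" by (rule card_le_size)
  finally show ?thesis .
qed

lemma cnt_exact:
  fixes f :: "real poly"
  assumes f: "f \<noteq> 0" and fin: "finite S1" "finite S2"
    and S1: "S1 \<subseteq> {x. poly f x = 0 \<and> (0 \<le> x \<and> x \<le> 2)}"
    and S2: "S2 \<subseteq> {x. poly f x = 0 \<and> \<not> (0 \<le> x \<and> x \<le> 2)}"
    and d: "card S1 + card S2 = Polynomial.degree f"
  shows "cnt f = card S1"
proof -
  let ?P = "\<lambda>x::real. 0 \<le> x \<and> x \<le> 2"
  have a: "card S1 \<le> cnt f" unfolding cnt_def by (rule card_le_filter[OF f fin(1) S1])
  have b: "card S2 \<le> size (filter_mset (\<lambda>x. \<not> ?P x) (proots f))" by (rule card_le_filter[OF f fin(2) S2])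
  have "size (filter_mset ?P (proots f)) + size (filter_mset (\<lambda>x. \<not> ?P x) (proots f)) = size (proots f)"
    by (metis multiset_partition size_union)
  also have "\<dots> \<le> Polynomial.degree f" by (rule size_proots_le)
  finally show ?thesis using a b d unfolding cnt_def by linarith
qed

lemma cnt_mult_lin: "g \<noteq> 0 \<Longrightarrow> cnt ([:-a,1:] * g) = (if 0 \<le> a \<and> a \<le> 2 then 1 else 0) + cnt g"
  by (subst cnt_mult) (auto simp: cnt_lin)

lemma cnt_lower:
  fixes f :: "real poly"
  assumes "f \<noteq> 0" "finite S" "S \<subseteq> {x. poly f x = 0 \<and> (0 \<le> x \<and> x \<le> 2)}"
  shows "card S \<le> cnt f"
  unfolding cnt_def by (rule card_le_filter[OF assms])

lemma quartic4:
  fixes f :: "real poly"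
  assumes f: "f \<noteq> 0" "Polynomial.degree f = 4"
    and a: "0 \<le> a0" "a0 < a1" "a1 < a2" "a2 = 2" "a2 < a3" "a3 < a4"
    and s: "poly f a0 * poly f a1 < 0" "poly f a1 * poly f a2 < 0" "poly f a2 * poly f a3 < 0" "poly f a3 * poly f a4 < 0"
  shows "cnt f = 2"
proof -
  obtain x1 where x1: "a0 < x1" "x1 < a1" "poly f x1 = 0" using poly_IVT[OF a(2) s(1)] by auto
  obtain x2 where x2: "a1 < x2" "x2 < a2" "poly f x2 = 0" using poly_IVT[OF a(3) s(2)] by auto
  obtain x3 where x3: "a2 < x3" "x3 < a3" "poly f x3 = 0" using poly_IVT[OF a(5) s(3)] by auto
  obtain x4 where x4: "a3 < x4" "x4 < a4" "poly f x4 = 0" using poly_IVT[OF a(6) s(4)] by auto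
  have "cnt f = card {x1,x2}"
  proof (rule cnt_exact[OF f(1), of _ "{x3,x4}"])
    have "x1 \<noteq> x2" "x3 \<noteq> x4" "x1 \<noteq> x3" "x1 \<noteq> x4" "x2 \<noteq> x3" "x2 \<noteq> x4"
      using x1 x2 x3 x4 a by linarith+
    thus "card {x1, x2} + card {x3, x4} = Polynomial.degree f" using f by simp
    show "{x1, x2} \<subseteq> {x. poly f x = 0 \<and> 0 \<le> x \<and> x \<le> 2}" using x1 x2 a by auto
    show "{x3, x4} \<subseteq> {x. poly f x = 0 \<and> \<not> (0 \<le> x \<and> x \<le> 2)}" using x3 x4 a by auto
  qed auto
  thus ?thesis using x1 x2 by auto
qed

lemma cubic3:
  fixes f :: "real poly"
  assumes f: "f \<noteq> 0" "Polynomial.degree f = 3"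
    and a: "0 \<le> a0" "a0 < a1" "a1 \<le> 2" "2 \<le> a2" "a2 < a3" "a3 < a4"
    and s: "poly f a0 * poly f a1 < 0" "poly f a2 * poly f a3 < 0" "poly f a3 * poly f a4 < 0"
  shows "cnt f = 1"
proof -
  obtain x1 where x1: "a0 < x1" "x1 < a1" "poly f x1 = 0" using poly_IVT[OF a(2) s(1)] by auto
  obtain x3 where x3: "a2 < x3" "x3 < a3" "poly f x3 = 0" using poly_IVT[OF a(5) s(2)] by auto
  obtain x4 where x4: "a3 < x4" "x4 < a4" "poly f x4 = 0" using poly_IVT[OF a(6) s(3)] by auto
  have "cnt f = card {x1}"
  proof (rule cnt_exact[OF f(1), of _ "{x3,x4}"])
    have "x3 \<noteq> x4" using x3 x4 by linarith
    thus "card {x1} + card {x3, x4} = Polynomial.degree f" using f by simp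
    show "{x1} \<subseteq> {x. poly f x = 0 \<and> 0 \<le> x \<and> x \<le> 2}" using x1 a by auto
    show "{x3, x4} \<subseteq> {x. poly f x = 0 \<and> \<not> (0 \<le> x \<and> x \<le> 2)}" using x3 x4 a by auto
  qed auto
  thus ?thesis by auto
qed

lemma Hdeg: "Polynomial.degree (Hp p q r c) = 4" by (simp add: Hp_def)

lemma pos_nat: "0 < N \<Longrightarrow> 0 < real N" by simp

lemma classA0:
  fixes p q r :: nat
  assumes "1 \<le> p" "1 \<le> q" "1 \<le> r" "r \<le> p"
  shows "cnt (Hp (real p) (real q) (real r) 0) = 2"
proof (rule quartic4[OF Hp_nz Hdeg, of 0 1 2 "real p + real q + 1" "real p + real q + real r + 3"])
  let ?H = "Hp (real p) (real q) (real r) 0"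
  have r: "real p \<ge> 1" "real q \<ge> 1" "real r \<ge> 1" "real r \<le> real p" using assms by auto
  have e0: "poly ?H 0 = real q * (real p + real q + real r + 2)"
    by (simp add: Hp_def algebra_simps power2_eq_square)
  have s0: "poly ?H 0 > 0" unfolding e0 using r by simp
  have e1: "poly ?H 1 = - (real p * real r)"
    by (simp add: Hp_def algebra_simps power2_eq_square)
  have s1: "poly ?H 1 < 0" unfolding e1 using r by simp
  have e2: "poly ?H 2 = real q * (real p + real q + real r - 2)"
    by (simp add: Hp_def algebra_simps power2_eq_square)
  have s2: "poly ?H 2 > 0" unfolding e2 using r by simp
  have e3: "poly ?H (real p + real q + 1) = - (real q * (real p - real r + real q))"
    by (simp add: Hp_def algebra_simps power2_eq_square)
  have s3: "poly ?H (real p + real q + 1) < 0" unfolding e3 using r by simp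
  have e4: "poly ?H (real p + real q + real r + 3) =
     real (12*q + 15*p*q + 3*q^2 + 15*q*r + 22*p + 22*r + 12 + 12*r^2 + 12*p^2 + 10*p^2*r + 10*p*r^2 + 4*p^2*q + 2*p*q^2 + 2*q^2*r + 4*q*r^2 + 27*p*r + 2*r^3 + 12*p*q*r + 2*p^3 + 2*p^2*q*r + 2*p^2*r^2 + p*q^2*r + 2*p*q*r^2 + p*r^3 + p^3*r)"
    by (simp add: Hp_def algebra_simps power2_eq_square power3_eq_cube)
  have s4: "poly ?H (real p + real q + real r + 3) > 0" unfolding e4 by (rule pos_nat) simp
  show "poly ?H 0 * poly ?H 1 < 0" using s0 s1 by (rule mult_pos_neg)
  show "poly ?H 1 * poly ?H 2 < 0" using s1 s2 by (rule mult_neg_pos)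
  show "poly ?H 2 * poly ?H (real p + real q + 1) < 0" using s2 s3 by (rule mult_pos_neg)
  show "poly ?H (real p + real q + 1) * poly ?H (real p + real q + real r + 3) < 0" using s3 s4 by (rule mult_neg_pos)
qed (use assms in auto)


lemma classA1:
  fixes p q r :: nat
  assumes "1 \<le> p" "1 \<le> q" "1 \<le> r"
  shows "cnt (Hp (real p) (real q) (real r) 1) = 2"
proof (rule quartic4[OF Hp_nz Hdeg, of 0 1 2 "real p + real q + 2" "real p + real q + real r + 3"])
  let ?H = "Hp (real p) (real q) (real r) 1"
  have r: "real p \<ge> 1" "real q \<ge> 1" "real r \<ge> 1" using assms by auto
  have e0: "poly ?H 0 = (real q + 2) * (real p + real q + real r + 2)"
    by (simp add: Hp_def algebra_simps power2_eq_square)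
  have s0: "poly ?H 0 > 0" unfolding e0 using r by simp
  have e1: "poly ?H 1 = - (real p * real r)"
    by (simp add: Hp_def algebra_simps power2_eq_square)
  have s1: "poly ?H 1 < 0" unfolding e1 using r by simp
  have e2: "poly ?H 2 = real q * (real p + real q + real r)"
    by (simp add: Hp_def algebra_simps power2_eq_square)
  have s2: "poly ?H 2 > 0" unfolding e2 using r by simp
  have e3: "poly ?H (real p + real q + 2) = - (real p * real r)"
    by (simp add: Hp_def algebra_simps power2_eq_square)
  have s3: "poly ?H (real p + real q + 2) < 0" unfolding e3 using r by simp
  have e4: "poly ?H (real p + real q + real r + 3) =
     real (4*q + 4 + 6*p*q + 8*p + q^2 + 6*q*r + 8*r + 13*p*r + 5*r^2 + 5*p^2 + 7*p^2*r + 8*p*q*r + 7*p*r^2 + 2*p^2*q + p*q^2 + 2*q*r^2 + r^3 + q^2*r + p^3 + 2*p^2*q*r + 2*p^2*r^2 + p*q^2*r + 2*p*q*r^2 + p*r^3 + p^3*r)"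
    by (simp add: Hp_def algebra_simps power2_eq_square power3_eq_cube)
  have s4: "poly ?H (real p + real q + real r + 3) > 0" unfolding e4 by (rule pos_nat) simp
  show "poly ?H 0 * poly ?H 1 < 0" using s0 s1 by (rule mult_pos_neg)
  show "poly ?H 1 * poly ?H 2 < 0" using s1 s2 by (rule mult_neg_pos)
  show "poly ?H 2 * poly ?H (real p + real q + 2) < 0" using s2 s3 by (rule mult_pos_neg)
  show "poly ?H (real p + real q + 2) * poly ?H (real p + real q + real r + 3) < 0" using s3 s4 by (rule mult_neg_pos)
qed (use assms in auto)

lemma poly_eqI2: "(\<And>t. poly f t = poly g (t::real)) \<Longrightarrow> f = g"
  by (rule poly_eq_cofinite[of "{}"]) auto

lemma classB:
  fixes p r :: nat
  assumes "1 \<le> p" "1 \<le> r" "2 \<le> p * r"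
  shows "cnt (Hp (real p) 0 (real r) 1) = 2"
proof -
  define CB :: "real poly" where "CB = [: -(2+real p+real r), 5+2*real p+2*real r+real p*real r, -(4+real p+real r), 1 :]"
  have fac: "Hp (real p) 0 (real r) 1 = [:-2,1:] * CB"
    by (rule poly_eqI2) (simp add: Hp_def CB_def algebra_simps power2_eq_square)
  have nz: "CB \<noteq> 0" and dg: "Polynomial.degree CB = 3" by (auto simp: CB_def)
  have r: "real p \<ge> 1" "real r \<ge> 1" "real p * real r \<ge> 2" using assms
    by (auto simp flip: of_nat_mult)
  have s0: "poly CB 0 < 0" using r by (simp add: CB_def)
  have s1: "poly CB 1 > 0" using r by (simp add: CB_def algebra_simps)
  have "(real p - 1) * (real r - 1) \<ge> 0" using r by simp
  hence s2: "poly CB 2 > 0" using r by (simp add: CB_def algebra_simps)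
  have e3: "poly CB (real p + 2) = - real r" by (simp add: CB_def algebra_simps power2_eq_square)
  have s3: "poly CB (real p + 2) < 0" unfolding e3 using r by simp
  have e4: "poly CB (real p + real r + 3) = real (4 + 4*r + 4*p + 5*p*r + r^2 + p^2 + p*r^2 + p^2*r)"
    by (simp add: CB_def algebra_simps power2_eq_square power3_eq_cube)
  have s4: "poly CB (real p + real r + 3) > 0" unfolding e4 by (rule pos_nat) simp
  have "cnt CB = 1"
  proof (rule cubic3[OF nz dg, of 0 1 2 "real p + 2" "real p + real r + 3"])
    show "poly CB 0 * poly CB 1 < 0" using s0 s1 by (rule mult_neg_pos)
    show "poly CB 2 * poly CB (real p + 2) < 0" using s2 s3 by (rule mult_pos_neg)
    show "poly CB (real p + 2) * poly CB (real p + real r + 3) < 0" using s3 s4 by (rule mult_neg_pos)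
  qed (use r in auto)
  thus ?thesis unfolding fac using cnt_mult_lin[OF nz, of 2] by simp
qed

lemma classC:
  fixes p q :: nat
  assumes "1 \<le> p" "1 \<le> q" "3 \<le> p + q"
  shows "cnt (Hp (real p) (real q) 0 0) = 2"
proof -
  define C :: "real poly" where "C = [: -(real q*(2+real p+real q)), 2+4*real q+2*real p+real p*real q+real q*real q, -(3+2*real q+real p), 1 :]"
  have fac: "Hp (real p) (real q) 0 0 = [:-1,1:] * C"
    by (rule poly_eqI2) (simp add: Hp_def C_def algebra_simps power2_eq_square)
  have nz: "C \<noteq> 0" and dg: "Polynomial.degree C = 3" by (auto simp: C_def)
  have r: "real p \<ge> 1" "real q \<ge> 1" "real p + real q \<ge> 3" using assms by auto
  have s0: "poly C 0 < 0" using r by (simp add: C_def)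
  have s1: "poly C 1 > 0" using r by (simp add: C_def algebra_simps)
  have e2: "poly C 2 = real q * (real p + real q - 2)" by (simp add: C_def algebra_simps)
  have s2: "poly C 2 > 0" unfolding e2 using r by simp
  have e3: "poly C (real p + real q + 1) = - real q" by (simp add: C_def algebra_simps power2_eq_square)
  have s3: "poly C (real p + real q + 1) < 0" unfolding e3 using r by simp
  have e4: "poly C (real p + real q + 2) = real (p*q + 2*p + p^2)"
    by (simp add: C_def algebra_simps power2_eq_square power3_eq_cube)
  have s4: "poly C (real p + real q + 2) > 0" unfolding e4 using assms by (intro pos_nat) simp
  have "cnt C = 1"
  proof (rule cubic3[OF nz dg, of 0 1 2 "real p + real q + 1" "real p + real q + 2"])
    show "poly C 0 * poly C 1 < 0" using s0 s1 by (rule mult_neg_pos)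
    show "poly C 2 * poly C (real p + real q + 1) < 0" using s2 s3 by (rule mult_pos_neg)
    show "poly C (real p + real q + 1) * poly C (real p + real q + 2) < 0" using s3 s4 by (rule mult_neg_pos)
  qed (use r in auto)
  thus ?thesis unfolding fac using cnt_mult_lin[OF nz, of 1] by simp
qed

lemma facC': "Hp (real p) (real q) 0 1 = [:-1,1:] * ([:-1,1:] * ([:-(real q+2),1:] * [:-(real p+real q+2),1:]))"
  by (rule poly_eqI2) (simp add: Hp_def algebra_simps power2_eq_square)

lemma facD: "Hp 0 (real q) 0 0 = [:-1,1:] * ([:-1,1:] * ([:-(real q),1:] * [:-(real q+2),1:]))"
  by (rule poly_eqI2) (simp add: Hp_def algebra_simps power2_eq_square)

lemma cnt4: "cnt ([:-a,1:] * ([:-b,1:] * ([:-c,1:] * [:-d,1:]))) =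
  (if 0 \<le> a \<and> a \<le> 2 then 1 else 0) + (if 0 \<le> b \<and> b \<le> 2 then 1 else 0) +
  (if 0 \<le> c \<and> c \<le> 2 then 1 else 0) + (if 0 \<le> d \<and> d \<le> 2 then 1 else 0)"
proof -
  have l: "[:-x,1:] \<noteq> (0::real poly)" for x by simp
  have nz1: "[:-c,1:] * [:-d,1:] \<noteq> (0::real poly)" by (intro no_zero_divisors l)
  have nz2: "[:-b,1:] * ([:-c,1:] * [:-d,1:]) \<noteq> (0::real poly)" by (intro no_zero_divisors l nz1)
  show ?thesis unfolding cnt_mult_lin[OF nz2] cnt_mult_lin[OF nz1] cnt_mult_lin[OF l] cnt_lin by simp
qed

lemma classC': "cnt (Hp (real p) (real q) 0 1) = 2 \<longleftrightarrow> 1 \<le> q"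
  unfolding facC' cnt4 by auto

lemma classD: "cnt (Hp 0 (real q) 0 0) = 2 \<longleftrightarrow> 3 \<le> q"
  unfolding facD cnt4 by auto

lemma g_root: "1 \<le> cnt [:2,-4,1:]"
proof -
  have "\<exists>x>0. x < 1 \<and> poly [:2,-4,1::real:] x = 0" by (rule poly_IVT) simp_all
  then obtain x where x: "0 < x" "x < 1" "poly [:2,-4,1::real:] x = 0" by auto
  have "card {x} \<le> cnt [:2,-4,1:]" by (rule cnt_lower) (use x in auto)
  thus ?thesis by simp
qed

lemma P4a: "3 \<le> cnt (Hp 1 0 1 1)"
proof -
  have fac: "Hp 1 0 1 1 = [:-2,1:] * ([:-2,1:] * [:2,-4,1:])"
    by (rule poly_eqI2) (simp add: Hp_def algebra_simps power2_eq_square)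
  have nz: "[:2,-4,1:] \<noteq> (0::real poly)" "[:-2,1:] * [:2,-4,1:] \<noteq> (0::real poly)" by simp_all
  show ?thesis unfolding fac cnt_mult_lin[OF nz(2)] cnt_mult_lin[OF nz(1)] using g_root by simp
qed

lemma P4b: "3 \<le> cnt (Hp 1 1 0 0)"
proof -
  have fac: "Hp 1 1 0 0 = [:-1,1:] * ([:-2,1:] * [:2,-4,1:])"
    by (rule poly_eqI2) (simp add: Hp_def algebra_simps power2_eq_square)
  have nz: "[:2,-4,1:] \<noteq> (0::real poly)" "[:-2,1:] * [:2,-4,1:] \<noteq> (0::real poly)" by simp_all
  show ?thesis unfolding fac cnt_mult_lin[OF nz(2)] cnt_mult_lin[OF nz(1)] using g_root by simp
qed

lemma classify:
  fixes p q r :: nat and c :: bool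
  assumes rp: "r \<le> p" and qc: "1 \<le> q \<or> c"
  shows "cnt (Hp (real p) (real q) (real r) (if c then 1 else 0)) = 2 \<longleftrightarrow>
    ((\<not>c \<and> 1 \<le> q \<and> 3 \<le> p+q+r) \<or> (c \<and> q = 0 \<and> 2 \<le> p*r) \<or> (c \<and> 1 \<le> q))"
proof (cases c)
  case True
  show ?thesis
  proof (cases "1 \<le> q")
    case q: True
    show ?thesis
    proof (cases "1 \<le> r")
      case True
      thus ?thesis using classA1[of p q r] q rp \<open>c\<close> by simp
    next
      case False
      hence "r = 0" by simp
      thus ?thesis using classC'[of p q] q \<open>c\<close> by simp
    qed
  next
    case False
    hence q0: "q = 0" by simp
    show ?thesis
    proof (cases "1 \<le> r")
      case r: True
      show ?thesis
      proof (cases "2 \<le> p * r")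
        case True
        thus ?thesis using classB[of p r] q0 r rp \<open>c\<close> by simp
      next
        case False
        have "p \<le> p * r" using r by simp
        hence "p = 1 \<and> r = 1" using r rp False by linarith
        thus ?thesis using P4a q0 \<open>c\<close> by auto
      qed
    next
      case False
      hence "r = 0" by simp
      thus ?thesis using classC'[of p q] q0 \<open>c\<close> by simp
    qed
  qed
next
  case False
  hence q: "1 \<le> q" using qc by simp
  show ?thesis
  proof (cases "1 \<le> r")
    case True
    thus ?thesis using classA0[of p q r] q rp \<open>\<not>c\<close> by simp
  next
    case False
    hence r0: "r = 0" by simp
    show ?thesis
    proof (cases "1 \<le> p")
      case p: True
      show ?thesis
      proof (cases "3 \<le> p + q")
        case True
        thus ?thesis using classC[of p q] p q r0 \<open>\<not>c\<close> by simp
      next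
        case False
        hence "p = 1 \<and> q = 1" using p q by simp
        thus ?thesis using P4b r0 \<open>\<not>c\<close> by auto
      qed
    next
      case False
      hence "p = 0" by simp
      thus ?thesis using classD[of q] r0 \<open>\<not>c\<close> q by simp
    qed
  qed
qed

lemma bs_count:
  fixes p q r :: nat and c :: bool
  assumes n: "n = p+q+r+2" and rp: "r \<le> p" and qc: "1 \<le> q \<or> c"
  shows "lap_mult_closed n (binary_star p q r c) 0 2 = n - 2 \<longleftrightarrow>
    ((\<not>c \<and> 1 \<le> q \<and> 3 \<le> p+q+r) \<or> (c \<and> q = 0 \<and> 2 \<le> p*r) \<or> (c \<and> 1 \<le> q))"
  using lap_bs_cnt[OF n, of c] classify[OF rp qc] n by auto

lemma iso_similar:
  assumes "graph_iso n A B"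
  shows "similar_mat (laplacian n A) (laplacian n B)"
proof -
  obtain f where bij: "bij_betw f {..<n} {..<n}" and adj: "\<And>i j. i < n \<Longrightarrow> j < n \<Longrightarrow> A i j \<longleftrightarrow> B (f i) (f j)"
    using assms unfolding graph_iso_def by blast
  have fn: "\<And>i. i < n \<Longrightarrow> f i < n" using bij by (auto simp: bij_betw_def)
  have finj: "inj_on f {..<n}" using bij by (auto simp: bij_betw_def)
  have deg: "\<And>i. i < n \<Longrightarrow> degree n A i = degree n B (f i)"
  proof -
    fix i assume i: "i < n"
    have "{k. k < n \<and> B (f i) k} = f ` {k. k < n \<and> A i k}"
    proof
      show "f ` {k. k < n \<and> A i k} \<subseteq> {k. k < n \<and> B (f i) k}" using adj i fn by auto
      show "{k. k < n \<and> B (f i) k} \<subseteq> f ` {k. k < n \<and> A i k}"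
      proof
        fix k assume k: "k \<in> {k. k < n \<and> B (f i) k}"
        then obtain k0 where k0: "k0 < n" "k = f k0" using bij by (auto simp: bij_betw_def)
        thus "k \<in> f ` {k. k < n \<and> A i k}" using k adj[OF i k0(1)] by auto
      qed
    qed
    moreover have "inj_on f {k. k < n \<and> A i k}" using finj by (rule inj_on_subset) auto
    ultimately show "degree n A i = degree n B (f i)" unfolding degree_def by (simp add: card_image)
  qed
  define P :: "real mat" where "P = mat n n (\<lambda>(i,k). if k = f i then 1 else 0)"
  define Q :: "real mat" where "Q = mat n n (\<lambda>(k,j). if k = f j then 1 else 0)"
  have cP: "P \<in> carrier_mat n n" and cQ: "Q \<in> carrier_mat n n" by (auto simp: P_def Q_def)
  have cL: "laplacian n B \<in> carrier_mat n n" "laplacian n A \<in> carrier_mat n n" by (auto simp: laplacian_def)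
  have PX: "\<And>X i j. X \<in> carrier_mat n n \<Longrightarrow> i < n \<Longrightarrow> j < n \<Longrightarrow> (P * X) $$ (i,j) = X $$ (f i, j)"
  proof -
    fix X :: "real mat" and i j assume X: "X \<in> carrier_mat n n" and i: "i < n" and j: "j < n"
    have "(P * X) $$ (i,j) = (\<Sum>k<n. P $$ (i,k) * X $$ (k,j))"
      using X i j cP by (simp add: scalar_prod_def lessThan_atLeast0)
    also have "\<dots> = (\<Sum>k<n. if k = f i then X $$ (k,j) else 0)"
      by (rule sum.cong) (auto simp: P_def i)
    also have "\<dots> = X $$ (f i, j)" using fn[OF i] by simp
    finally show "(P * X) $$ (i,j) = X $$ (f i, j)" .
  qed
  have XQ: "\<And>X i j. X \<in> carrier_mat n n \<Longrightarrow> i < n \<Longrightarrow> j < n \<Longrightarrow> (X * Q) $$ (i,j) = X $$ (i, f j)"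
  proof -
    fix X :: "real mat" and i j assume X: "X \<in> carrier_mat n n" and i: "i < n" and j: "j < n"
    have "(X * Q) $$ (i,j) = (\<Sum>k<n. X $$ (i,k) * Q $$ (k,j))"
      using X i j cQ by (simp add: scalar_prod_def lessThan_atLeast0)
    also have "\<dots> = (\<Sum>k<n. if k = f j then X $$ (i,k) else 0)"
      by (rule sum.cong) (auto simp: Q_def j)
    also have "\<dots> = X $$ (i, f j)" using fn[OF j] by simp
    finally show "(X * Q) $$ (i,j) = X $$ (i, f j)" .
  qed
  have PQ: "P * Q = 1\<^sub>m n"
  proof (rule eq_matI)
    fix i j assume i: "i < dim_row (1\<^sub>m n :: real mat)" and j: "j < dim_col (1\<^sub>m n :: real mat)"
    hence i: "i < n" and j: "j < n" by auto
    have "(P * Q) $$ (i,j) = Q $$ (f i, j)" by (rule PX[OF cQ i j])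
    also have "\<dots> = (if i = j then 1 else 0)"
    proof -
      have "f i = f j \<longleftrightarrow> i = j" using inj_on_eq_iff[OF finj] i j by simp
      thus ?thesis using fn[OF i] j by (simp add: Q_def)
    qed
    finally show "(P * Q) $$ (i,j) = 1\<^sub>m n $$ (i,j)" using i j by simp
  qed (use cP cQ in auto)
  have QP: "Q * P = 1\<^sub>m n"
  proof (rule eq_matI)
    fix i j assume i: "i < dim_row (1\<^sub>m n :: real mat)" and j: "j < dim_col (1\<^sub>m n :: real mat)"
    hence i: "i < n" and j: "j < n" by auto
    have "(Q * P) $$ (i,j) = (\<Sum>k<n. Q $$ (i,k) * P $$ (k,j))"
      using i j cQ cP by (simp add: scalar_prod_def lessThan_atLeast0)
    also have "\<dots> = (\<Sum>k<n. (\<lambda>x. if i = x \<and> j = x then 1 else 0) (f k))"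
      by (rule sum.cong) (auto simp: Q_def P_def i j)
    also have "\<dots> = (\<Sum>x<n. if i = x \<and> j = x then 1 else 0)"
      using sum.reindex_bij_betw[OF bij, of "\<lambda>x. if i = x \<and> j = x then (1::real) else 0"] by simp
    also have "\<dots> = (if i = j then 1 else 0)"
    proof (cases "i = j")
      case True thus ?thesis using i by simp
    next
      case False thus ?thesis by (auto intro: sum.neutral)
    qed
    finally show "(Q * P) $$ (i,j) = 1\<^sub>m n $$ (i,j)" using i j by simp
  qed (use cP cQ in auto)
  have L: "laplacian n A = P * laplacian n B * Q"
  proof (rule eq_matI)
    fix i j assume i: "i < dim_row (P * laplacian n B * Q)" and j: "j < dim_col (P * laplacian n B * Q)"
    hence i: "i < n" and j: "j < n" using cP cQ by auto
    have "(P * laplacian n B * Q) $$ (i,j) = (P * laplacian n B) $$ (i, f j)"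
      by (rule XQ[OF _ i j]) (use cP cL in auto)
    also have "\<dots> = laplacian n B $$ (f i, f j)" by (rule PX[OF cL(1) i fn[OF j]])
    also have "\<dots> = laplacian n A $$ (i,j)"
    proof -
      have "f i = f j \<longleftrightarrow> i = j" using inj_on_eq_iff[OF finj] i j by simp
      thus ?thesis using i j fn[OF i] fn[OF j] deg[OF i] deg[OF j] adj[OF i j] by (simp add: laplacian_def)
    qed
    finally show "laplacian n A $$ (i,j) = (P * laplacian n B * Q) $$ (i,j)" ..
  qed (use cP cQ cL in auto)
  show ?thesis by (rule similar_matI[of _ _ P Q n]) (use cP cQ cL PQ QP L in auto)
qed

lemma iso_lmc: "graph_iso n A B \<Longrightarrow> lap_mult_closed n A a b = lap_mult_closed n B a b"
  unfolding lap_mult_closed_def using char_poly_similar[OF iso_similar] by simp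

lemma construct:
  fixes A :: "nat \<Rightarrow> nat \<Rightarrow> bool"
  assumes sg: "sgraph n A"
    and uv: "u < n" "v < n" "u \<noteq> v"
    and Sdef: "S = {..<n} - {u,v}"
    and ind: "\<And>x y. x \<in> S \<Longrightarrow> y \<in> S \<Longrightarrow> \<not> A x y"
    and nb: "\<And>s. s \<in> S \<Longrightarrow> A s u \<or> A s v"
  shows "graph_iso n A (binary_star (card {s\<in>S. A s u \<and> \<not> A s v}) (card {s\<in>S. A s u \<and> A s v}) (card {s\<in>S. \<not>A s u \<and> A s v}) (A u v))
     \<and> n = card {s\<in>S. A s u \<and> \<not> A s v} + card {s\<in>S. A s u \<and> A s v} + card {s\<in>S. \<not>A s u \<and> A s v} + 2"
proof -
  define W where "W = {s\<in>S. A s u \<and> A s v}"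
  define U where "U = {s\<in>S. A s u \<and> \<not> A s v}"
  define V where "V = {s\<in>S. \<not> A s u \<and> A s v}"
  define p where "p = card U"
  define q where "q = card W"
  define r where "r = card V"
  define c where "c = A u v"
  have symA: "\<And>x y. A x y \<longleftrightarrow> A y x" using sg unfolding sgraph_def by blast
  have irr: "\<And>x. \<not> A x x" using sg unfolding sgraph_def by blast
  have finS: "finite S" unfolding Sdef by simp
  have fW: "finite W" "finite U" "finite V" unfolding W_def U_def V_def using finS by auto
  obtain hW where hW: "bij_betw hW W {0..<q}" using ex_bij_betw_finite_nat[OF fW(1)] unfolding q_def by blast
  obtain hU where hU: "bij_betw hU U {0..<p}" using ex_bij_betw_finite_nat[OF fW(2)] unfolding p_def by blast
  obtain hV where hV: "bij_betw hV V {0..<r}" using ex_bij_betw_finite_nat[OF fW(3)] unfolding r_def by blast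
  define g where "g x = (if x = u then 0 else if x = v then 1 else if x \<in> W then 2 + hW x
     else if x \<in> U then q + 2 + hU x else q + p + 2 + hV x)" for x
  have Wsub: "W \<subseteq> S" "U \<subseteq> S" "V \<subseteq> S" by (auto simp: W_def U_def V_def)
  have uvS: "u \<notin> S" "v \<notin> S" using Sdef by auto
  have Spart: "\<And>x. x \<in> S \<Longrightarrow> x \<in> W \<or> x \<in> U \<or> x \<in> V" using nb by (auto simp: W_def U_def V_def)
  have disj: "\<And>x. x \<in> W \<Longrightarrow> x \<notin> U \<and> x \<notin> V" "\<And>x. x \<in> U \<Longrightarrow> x \<notin> V"
    by (auto simp: W_def U_def V_def)
  have uvW: "\<And>x. x \<in> W \<Longrightarrow> x \<noteq> u \<and> x \<noteq> v" "\<And>x. x \<in> U \<Longrightarrow> x \<noteq> u \<and> x \<noteq> v" "\<And>x. x \<in> V \<Longrightarrow> x \<noteq> u \<and> x \<noteq> v"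
    using Wsub uvS by auto
  have gu: "g u = 0" and gv: "g v = 1" using uv by (auto simp: g_def)
  have gW: "\<And>x. x \<in> W \<Longrightarrow> g x = 2 + hW x \<and> hW x < q"
    using uvW hW by (auto simp: g_def bij_betw_def)
  have gU: "\<And>x. x \<in> U \<Longrightarrow> g x = q + 2 + hU x \<and> hU x < p"
    using uvW disj hU by (auto simp: g_def bij_betw_def)
  have gV: "\<And>x. x \<in> V \<Longrightarrow> g x = q + p + 2 + hV x \<and> hV x < r"
    using uvW disj hV by (auto simp: g_def bij_betw_def)
  have Sun: "S = W \<union> U \<union> V" using Spart Wsub by blast
  have ncard: "n = p + q + r + 2"
  proof -
    have e: "{..<n} = (W \<union> U \<union> V) \<union> {u,v}" using Sdef Sun uv by auto
    have "card ((W \<union> U \<union> V) \<union> {u,v}) = card (W \<union> U \<union> V) + card {u,v}"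
      by (rule card_Un_disjoint) (use fW uvW in auto)
    hence "card {..<n} = card (W \<union> U \<union> V) + card {u,v}" unfolding e[symmetric] .
    moreover have "card (W \<union> U \<union> V) = q + p + r"
      using fW disj unfolding p_def q_def r_def
      by (subst card_Un_disjoint, simp, simp, blast)+ simp
    ultimately show ?thesis using uv by simp
  qed
  have rng: "\<And>x. x < n \<Longrightarrow> x = u \<or> x = v \<or> x \<in> W \<or> x \<in> U \<or> x \<in> V"
    using Sdef Spart by blast
  have gW1: "\<And>x. x \<in> W \<Longrightarrow> g x = 2 + hW x" and gW2: "\<And>x. x \<in> W \<Longrightarrow> hW x < q" using gW by auto
  have gU1: "\<And>x. x \<in> U \<Longrightarrow> g x = q + 2 + hU x" and gU2: "\<And>x. x \<in> U \<Longrightarrow> hU x < p" using gU by auto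
  have gV1: "\<And>x. x \<in> V \<Longrightarrow> g x = q + p + 2 + hV x" and gV2: "\<And>x. x \<in> V \<Longrightarrow> hV x < r" using gV by auto
  have iW: "inj_on hW W" "inj_on hU U" "inj_on hV V" using hW hU hV by (auto simp: bij_betw_def)
  have I1: "\<And>x y. x = u \<Longrightarrow> y = u \<Longrightarrow> g x = g y \<Longrightarrow> x = y"
  proof -
    fix x y assume a: "x = u" and b: "y = u" and e: "g x = g y"
    show "x = y" using a b by simp
  qed
  have I2: "\<And>x y. x = u \<Longrightarrow> y = v \<Longrightarrow> g x = g y \<Longrightarrow> x = y"
  proof -
    fix x y assume a: "x = u" and b: "y = v" and e: "g x = g y"
    show "x = y" using  gu gv e   unfolding a b by linarith
  qed
  have I3: "\<And>x y. x = u \<Longrightarrow> y \<in> W \<Longrightarrow> g x = g y \<Longrightarrow> x = y"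
  proof -
    fix x y assume a: "x = u" and b: "y \<in> W" and e: "g x = g y"
    show "x = y" using  gu gW1[OF b] gW2[OF b] e   unfolding a by linarith
  qed
  have I4: "\<And>x y. x = u \<Longrightarrow> y \<in> U \<Longrightarrow> g x = g y \<Longrightarrow> x = y"
  proof -
    fix x y assume a: "x = u" and b: "y \<in> U" and e: "g x = g y"
    show "x = y" using  gu gU1[OF b] gU2[OF b] e   unfolding a by linarith
  qed
  have I5: "\<And>x y. x = u \<Longrightarrow> y \<in> V \<Longrightarrow> g x = g y \<Longrightarrow> x = y"
  proof -
    fix x y assume a: "x = u" and b: "y \<in> V" and e: "g x = g y"
    show "x = y" using  gu gV1[OF b] gV2[OF b] e   unfolding a by linarith
  qed
  have I6: "\<And>x y. x = v \<Longrightarrow> y = u \<Longrightarrow> g x = g y \<Longrightarrow> x = y"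
  proof -
    fix x y assume a: "x = v" and b: "y = u" and e: "g x = g y"
    show "x = y" using  gv gu e   unfolding a b by linarith
  qed
  have I7: "\<And>x y. x = v \<Longrightarrow> y = v \<Longrightarrow> g x = g y \<Longrightarrow> x = y"
  proof -
    fix x y assume a: "x = v" and b: "y = v" and e: "g x = g y"
    show "x = y" using a b by simp
  qed
  have I8: "\<And>x y. x = v \<Longrightarrow> y \<in> W \<Longrightarrow> g x = g y \<Longrightarrow> x = y"
  proof -
    fix x y assume a: "x = v" and b: "y \<in> W" and e: "g x = g y"
    show "x = y" using  gv gW1[OF b] gW2[OF b] e   unfolding a by linarith
  qed
  have I9: "\<And>x y. x = v \<Longrightarrow> y \<in> U \<Longrightarrow> g x = g y \<Longrightarrow> x = y"
  proof -
    fix x y assume a: "x = v" and b: "y \<in> U" and e: "g x = g y"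
    show "x = y" using  gv gU1[OF b] gU2[OF b] e   unfolding a by linarith
  qed
  have I10: "\<And>x y. x = v \<Longrightarrow> y \<in> V \<Longrightarrow> g x = g y \<Longrightarrow> x = y"
  proof -
    fix x y assume a: "x = v" and b: "y \<in> V" and e: "g x = g y"
    show "x = y" using  gv gV1[OF b] gV2[OF b] e   unfolding a by linarith
  qed
  have I11: "\<And>x y. x \<in> W \<Longrightarrow> y = u \<Longrightarrow> g x = g y \<Longrightarrow> x = y"
  proof -
    fix x y assume a: "x \<in> W" and b: "y = u" and e: "g x = g y"
    show "x = y" using  gW1[OF a] gW2[OF a] gu e   unfolding b by linarith
  qed
  have I12: "\<And>x y. x \<in> W \<Longrightarrow> y = v \<Longrightarrow> g x = g y \<Longrightarrow> x = y"
  proof -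
    fix x y assume a: "x \<in> W" and b: "y = v" and e: "g x = g y"
    show "x = y" using  gW1[OF a] gW2[OF a] gv e   unfolding b by linarith
  qed
  have I13: "\<And>x y. x \<in> W \<Longrightarrow> y \<in> W \<Longrightarrow> g x = g y \<Longrightarrow> x = y"
  proof -
    fix x y assume a: "x \<in> W" and b: "y \<in> W" and e: "g x = g y"
    show "x = y" using gW1[OF a] gW2[OF a] gW1[OF b] gW2[OF b] e inj_onD[OF iW(1) _ a b] by simp
  qed
  have I14: "\<And>x y. x \<in> W \<Longrightarrow> y \<in> U \<Longrightarrow> g x = g y \<Longrightarrow> x = y"
  proof -
    fix x y assume a: "x \<in> W" and b: "y \<in> U" and e: "g x = g y"
    show "x = y" using gW1[OF a] gW2[OF a] gU1[OF b] gU2[OF b] e a b uv(3) by linarith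
  qed
  have I15: "\<And>x y. x \<in> W \<Longrightarrow> y \<in> V \<Longrightarrow> g x = g y \<Longrightarrow> x = y"
  proof -
    fix x y assume a: "x \<in> W" and b: "y \<in> V" and e: "g x = g y"
    show "x = y" using gW1[OF a] gW2[OF a] gV1[OF b] gV2[OF b] e a b uv(3) by linarith
  qed
  have I16: "\<And>x y. x \<in> U \<Longrightarrow> y = u \<Longrightarrow> g x = g y \<Longrightarrow> x = y"
  proof -
    fix x y assume a: "x \<in> U" and b: "y = u" and e: "g x = g y"
    show "x = y" using  gU1[OF a] gU2[OF a] gu e   unfolding b by linarith
  qed
  have I17: "\<And>x y. x \<in> U \<Longrightarrow> y = v \<Longrightarrow> g x = g y \<Longrightarrow> x = y"
  proof -
    fix x y assume a: "x \<in> U" and b: "y = v" and e: "g x = g y"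
    show "x = y" using  gU1[OF a] gU2[OF a] gv e   unfolding b by linarith
  qed
  have I18: "\<And>x y. x \<in> U \<Longrightarrow> y \<in> W \<Longrightarrow> g x = g y \<Longrightarrow> x = y"
  proof -
    fix x y assume a: "x \<in> U" and b: "y \<in> W" and e: "g x = g y"
    show "x = y" using gU1[OF a] gU2[OF a] gW1[OF b] gW2[OF b] e a b uv(3) by linarith
  qed
  have I19: "\<And>x y. x \<in> U \<Longrightarrow> y \<in> U \<Longrightarrow> g x = g y \<Longrightarrow> x = y"
  proof -
    fix x y assume a: "x \<in> U" and b: "y \<in> U" and e: "g x = g y"
    show "x = y" using gU1[OF a] gU2[OF a] gU1[OF b] gU2[OF b] e inj_onD[OF iW(2) _ a b] by simp
  qed
  have I20: "\<And>x y. x \<in> U \<Longrightarrow> y \<in> V \<Longrightarrow> g x = g y \<Longrightarrow> x = y"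
  proof -
    fix x y assume a: "x \<in> U" and b: "y \<in> V" and e: "g x = g y"
    show "x = y" using gU1[OF a] gU2[OF a] gV1[OF b] gV2[OF b] e a b uv(3) by linarith
  qed
  have I21: "\<And>x y. x \<in> V \<Longrightarrow> y = u \<Longrightarrow> g x = g y \<Longrightarrow> x = y"
  proof -
    fix x y assume a: "x \<in> V" and b: "y = u" and e: "g x = g y"
    show "x = y" using  gV1[OF a] gV2[OF a] gu e   unfolding b by linarith
  qed
  have I22: "\<And>x y. x \<in> V \<Longrightarrow> y = v \<Longrightarrow> g x = g y \<Longrightarrow> x = y"
  proof -
    fix x y assume a: "x \<in> V" and b: "y = v" and e: "g x = g y"
    show "x = y" using  gV1[OF a] gV2[OF a] gv e   unfolding b by linarith
  qed
  have I23: "\<And>x y. x \<in> V \<Longrightarrow> y \<in> W \<Longrightarrow> g x = g y \<Longrightarrow> x = y"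
  proof -
    fix x y assume a: "x \<in> V" and b: "y \<in> W" and e: "g x = g y"
    show "x = y" using gV1[OF a] gV2[OF a] gW1[OF b] gW2[OF b] e a b uv(3) by linarith
  qed
  have I24: "\<And>x y. x \<in> V \<Longrightarrow> y \<in> U \<Longrightarrow> g x = g y \<Longrightarrow> x = y"
  proof -
    fix x y assume a: "x \<in> V" and b: "y \<in> U" and e: "g x = g y"
    show "x = y" using gV1[OF a] gV2[OF a] gU1[OF b] gU2[OF b] e a b uv(3) by linarith
  qed
  have I25: "\<And>x y. x \<in> V \<Longrightarrow> y \<in> V \<Longrightarrow> g x = g y \<Longrightarrow> x = y"
  proof -
    fix x y assume a: "x \<in> V" and b: "y \<in> V" and e: "g x = g y"
    show "x = y" using gV1[OF a] gV2[OF a] gV1[OF b] gV2[OF b] e inj_onD[OF iW(3) _ a b] by simp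
  qed
  have ginj: "inj_on g {..<n}"
  proof (rule inj_onI)
    fix x y assume x: "x \<in> {..<n}" and y: "y \<in> {..<n}" and e: "g x = g y"
    have x': "x < n" and y': "y < n" using x y by auto
    show "x = y"
    proof -
      consider (X1) "x = u" | (X2) "x = v" | (X3) "x \<in> W" | (X4) "x \<in> U" | (X5) "x \<in> V" using rng[OF x'] by blast
      then show ?thesis
      proof cases
        case X1
        consider (Y1) "y = u" | (Y2) "y = v" | (Y3) "y \<in> W" | (Y4) "y \<in> U" | (Y5) "y \<in> V" using rng[OF y'] by blast
        then show ?thesis
        proof cases
          case Y1 show ?thesis by (rule I1[OF X1 Y1 e])
        next
          case Y2 show ?thesis by (rule I2[OF X1 Y2 e])
        next
          case Y3 show ?thesis by (rule I3[OF X1 Y3 e])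
        next
          case Y4 show ?thesis by (rule I4[OF X1 Y4 e])
        next
          case Y5 show ?thesis by (rule I5[OF X1 Y5 e])
        qed
      next
        case X2
        consider (Y1) "y = u" | (Y2) "y = v" | (Y3) "y \<in> W" | (Y4) "y \<in> U" | (Y5) "y \<in> V" using rng[OF y'] by blast
        then show ?thesis
        proof cases
          case Y1 show ?thesis by (rule I6[OF X2 Y1 e])
        next
          case Y2 show ?thesis by (rule I7[OF X2 Y2 e])
        next
          case Y3 show ?thesis by (rule I8[OF X2 Y3 e])
        next
          case Y4 show ?thesis by (rule I9[OF X2 Y4 e])
        next
          case Y5 show ?thesis by (rule I10[OF X2 Y5 e])
        qed
      next
        case X3
        consider (Y1) "y = u" | (Y2) "y = v" | (Y3) "y \<in> W" | (Y4) "y \<in> U" | (Y5) "y \<in> V" using rng[OF y'] by blast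
        then show ?thesis
        proof cases
          case Y1 show ?thesis by (rule I11[OF X3 Y1 e])
        next
          case Y2 show ?thesis by (rule I12[OF X3 Y2 e])
        next
          case Y3 show ?thesis by (rule I13[OF X3 Y3 e])
        next
          case Y4 show ?thesis by (rule I14[OF X3 Y4 e])
        next
          case Y5 show ?thesis by (rule I15[OF X3 Y5 e])
        qed
      next
        case X4
        consider (Y1) "y = u" | (Y2) "y = v" | (Y3) "y \<in> W" | (Y4) "y \<in> U" | (Y5) "y \<in> V" using rng[OF y'] by blast
        then show ?thesis
        proof cases
          case Y1 show ?thesis by (rule I16[OF X4 Y1 e])
        next
          case Y2 show ?thesis by (rule I17[OF X4 Y2 e])
        next
          case Y3 show ?thesis by (rule I18[OF X4 Y3 e])
        next
          case Y4 show ?thesis by (rule I19[OF X4 Y4 e])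
        next
          case Y5 show ?thesis by (rule I20[OF X4 Y5 e])
        qed
      next
        case X5
        consider (Y1) "y = u" | (Y2) "y = v" | (Y3) "y \<in> W" | (Y4) "y \<in> U" | (Y5) "y \<in> V" using rng[OF y'] by blast
        then show ?thesis
        proof cases
          case Y1 show ?thesis by (rule I21[OF X5 Y1 e])
        next
          case Y2 show ?thesis by (rule I22[OF X5 Y2 e])
        next
          case Y3 show ?thesis by (rule I23[OF X5 Y3 e])
        next
          case Y4 show ?thesis by (rule I24[OF X5 Y4 e])
        next
          case Y5 show ?thesis by (rule I25[OF X5 Y5 e])
        qed
      qed
    qed
  qed
  have Mu: "\<And>x. x = u \<Longrightarrow> g x < n"
  proof -
    fix x assume a: "x = u"
    show "g x < n" using a gu ncard uv by simp
  qed
  have Mv: "\<And>x. x = v \<Longrightarrow> g x < n"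
  proof -
    fix x assume a: "x = v"
    show "g x < n" using a gv ncard uv by simp
  qed
  have MW: "\<And>x. x \<in> W \<Longrightarrow> g x < n"
  proof -
    fix x assume a: "x \<in> W"
    show "g x < n" using a gW1[OF a] gW2[OF a] ncard by linarith
  qed
  have MU: "\<And>x. x \<in> U \<Longrightarrow> g x < n"
  proof -
    fix x assume a: "x \<in> U"
    show "g x < n" using a gU1[OF a] gU2[OF a] ncard by linarith
  qed
  have MV: "\<And>x. x \<in> V \<Longrightarrow> g x < n"
  proof -
    fix x assume a: "x \<in> V"
    show "g x < n" using a gV1[OF a] gV2[OF a] ncard by linarith
  qed
  have gimg: "g ` {..<n} \<subseteq> {..<n}"
  proof
    fix y assume "y \<in> g ` {..<n}"
    then obtain x where x: "x < n" "y = g x" by auto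
    consider (X1) "x = u" | (X2) "x = v" | (X3) "x \<in> W" | (X4) "x \<in> U" | (X5) "x \<in> V" using rng[OF x(1)] by blast
    hence "g x < n"
    proof cases
      case X1 show ?thesis by (rule Mu[OF X1])
    next
      case X2 show ?thesis by (rule Mv[OF X2])
    next
      case X3 show ?thesis by (rule MW[OF X3])
    next
      case X4 show ?thesis by (rule MU[OF X4])
    next
      case X5 show ?thesis by (rule MV[OF X5])
    qed
    thus "y \<in> {..<n}" using x by simp
  qed
  have gbij: "bij_betw g {..<n} {..<n}"
    unfolding bij_betw_def using ginj endo_inj_surj[OF _ gimg ginj] by simp
  have Au: "\<And>x. x \<in> W \<Longrightarrow> A x u \<and> A u x \<and> A x v \<and> A v x"
    "\<And>x. x \<in> U \<Longrightarrow> A x u \<and> A u x \<and> \<not> A x v \<and> \<not> A v x"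
    "\<And>x. x \<in> V \<Longrightarrow> \<not> A x u \<and> \<not> A u x \<and> A x v \<and> A v x"
    using symA by (auto simp: W_def U_def V_def)
  have AS: "\<And>x y. x \<in> W \<union> U \<union> V \<Longrightarrow> y \<in> W \<union> U \<union> V \<Longrightarrow> \<not> A x y"
    using ind Sun by blast
  have Auv: "A u v = c" "A v u = c" "\<not> A u u" "\<not> A v v" using symA irr by (auto simp: c_def)
  note facts = Au AS Auv gu gv gW gU gV bs0 bs1 bs1' bsge bs_irrefl uv(3) uv(3)[symmetric] uvW
  have adj: "\<And>i j. i < n \<Longrightarrow> j < n \<Longrightarrow> A i j \<longleftrightarrow> binary_star p q r c (g i) (g j)"
  proof -
    have C1: "\<And>i j. i = u \<Longrightarrow> j = u \<Longrightarrow> A i j \<longleftrightarrow> binary_star p q r c (g i) (g j)"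
      by (simp add: facts)
    have C2: "\<And>i j. i = u \<Longrightarrow> j = v \<Longrightarrow> A i j \<longleftrightarrow> binary_star p q r c (g i) (g j)"
      by (simp add: facts)
    have C3: "\<And>i j. i = u \<Longrightarrow> j \<in> W \<Longrightarrow> A i j \<longleftrightarrow> binary_star p q r c (g i) (g j)"
      apply (simp add: facts) using gW gU gV by fastforce
    have C4: "\<And>i j. i = u \<Longrightarrow> j \<in> U \<Longrightarrow> A i j \<longleftrightarrow> binary_star p q r c (g i) (g j)"
      by (simp add: facts)
    have C5: "\<And>i j. i = u \<Longrightarrow> j \<in> V \<Longrightarrow> A i j \<longleftrightarrow> binary_star p q r c (g i) (g j)"
      by (simp add: facts)
    have C6: "\<And>i j. i = v \<Longrightarrow> j = u \<Longrightarrow> A i j \<longleftrightarrow> binary_star p q r c (g i) (g j)"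
      by (simp add: facts)
    have C7: "\<And>i j. i = v \<Longrightarrow> j = v \<Longrightarrow> A i j \<longleftrightarrow> binary_star p q r c (g i) (g j)"
      by (simp add: facts)
    have C8: "\<And>i j. i = v \<Longrightarrow> j \<in> W \<Longrightarrow> A i j \<longleftrightarrow> binary_star p q r c (g i) (g j)"
      by (simp add: facts)
    have C9: "\<And>i j. i = v \<Longrightarrow> j \<in> U \<Longrightarrow> A i j \<longleftrightarrow> binary_star p q r c (g i) (g j)"
      apply (simp add: facts) using gW gU gV by fastforce
    have C10: "\<And>i j. i = v \<Longrightarrow> j \<in> V \<Longrightarrow> A i j \<longleftrightarrow> binary_star p q r c (g i) (g j)"
      by (simp add: facts)
    have C11: "\<And>i j. i \<in> W \<Longrightarrow> j = u \<Longrightarrow> A i j \<longleftrightarrow> binary_star p q r c (g i) (g j)"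
      apply (simp add: facts) using gW gU gV by fastforce
    have C12: "\<And>i j. i \<in> W \<Longrightarrow> j = v \<Longrightarrow> A i j \<longleftrightarrow> binary_star p q r c (g i) (g j)"
      by (simp add: facts)
    have C13: "\<And>i j. i \<in> W \<Longrightarrow> j \<in> W \<Longrightarrow> A i j \<longleftrightarrow> binary_star p q r c (g i) (g j)"
      by (simp add: facts)
    have C14: "\<And>i j. i \<in> W \<Longrightarrow> j \<in> U \<Longrightarrow> A i j \<longleftrightarrow> binary_star p q r c (g i) (g j)"
      by (simp add: facts)
    have C15: "\<And>i j. i \<in> W \<Longrightarrow> j \<in> V \<Longrightarrow> A i j \<longleftrightarrow> binary_star p q r c (g i) (g j)"
      by (simp add: facts)
    have C16: "\<And>i j. i \<in> U \<Longrightarrow> j = u \<Longrightarrow> A i j \<longleftrightarrow> binary_star p q r c (g i) (g j)"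
      by (simp add: facts)
    have C17: "\<And>i j. i \<in> U \<Longrightarrow> j = v \<Longrightarrow> A i j \<longleftrightarrow> binary_star p q r c (g i) (g j)"
      apply (simp add: facts) using gW gU gV by fastforce
    have C18: "\<And>i j. i \<in> U \<Longrightarrow> j \<in> W \<Longrightarrow> A i j \<longleftrightarrow> binary_star p q r c (g i) (g j)"
      by (simp add: facts)
    have C19: "\<And>i j. i \<in> U \<Longrightarrow> j \<in> U \<Longrightarrow> A i j \<longleftrightarrow> binary_star p q r c (g i) (g j)"
      by (simp add: facts)
    have C20: "\<And>i j. i \<in> U \<Longrightarrow> j \<in> V \<Longrightarrow> A i j \<longleftrightarrow> binary_star p q r c (g i) (g j)"
      by (simp add: facts)
    have C21: "\<And>i j. i \<in> V \<Longrightarrow> j = u \<Longrightarrow> A i j \<longleftrightarrow> binary_star p q r c (g i) (g j)"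
      by (simp add: facts)
    have C22: "\<And>i j. i \<in> V \<Longrightarrow> j = v \<Longrightarrow> A i j \<longleftrightarrow> binary_star p q r c (g i) (g j)"
      by (simp add: facts)
    have C23: "\<And>i j. i \<in> V \<Longrightarrow> j \<in> W \<Longrightarrow> A i j \<longleftrightarrow> binary_star p q r c (g i) (g j)"
      by (simp add: facts)
    have C24: "\<And>i j. i \<in> V \<Longrightarrow> j \<in> U \<Longrightarrow> A i j \<longleftrightarrow> binary_star p q r c (g i) (g j)"
      by (simp add: facts)
    have C25: "\<And>i j. i \<in> V \<Longrightarrow> j \<in> V \<Longrightarrow> A i j \<longleftrightarrow> binary_star p q r c (g i) (g j)"
      by (simp add: facts)
    fix i j assume i: "i < n" and j: "j < n"
    show "A i j \<longleftrightarrow> binary_star p q r c (g i) (g j)" using rng[OF i] rng[OF j]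
      by (elim disjE) ((rule C1 C2 C3 C4 C5 C6 C7 C8 C9 C10 C11 C12 C13 C14 C15 C16 C17 C18 C19 C20 C21 C22 C23 C24 C25, assumption, assumption))+
  qed
  have "graph_iso n A (binary_star p q r c)" unfolding graph_iso_def using gbij adj by blast
  thus ?thesis using ncard by (simp add: p_def q_def r_def c_def U_def W_def V_def)
qed

lemma exists_S:
  assumes "sgraph n A"
  shows "\<exists>S. independent_set n A S \<and> card S = indep_num n A"
proof -
  let ?F = "{card S | S. independent_set n A S}"
  have "?F \<subseteq> {..n}"
  proof
    fix k assume "k \<in> ?F"
    then obtain S where S: "independent_set n A S" "k = card S" by blast
    have "S \<subseteq> {..<n}" using S(1) unfolding independent_set_def by blast
    hence "card S \<le> card {..<n}" by (intro card_mono) auto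
    thus "k \<in> {..n}" using S(2) by simp
  qed
  hence fin: "finite ?F" by (rule finite_subset) simp
  have "independent_set n A {}" unfolding independent_set_def by simp
  hence ne: "?F \<noteq> {}" by blast
  have "Max ?F \<in> ?F" by (rule Max_in[OF fin ne])
  then obtain S where S: "independent_set n A S" "Max ?F = card S" by blast
  show ?thesis unfolding indep_num_def by (rule exI[of _ S]) (use S in simp)
qed

lemma graph_structure:
  assumes sg: "sgraph n A" and con: "connected_graph n A" and ind: "indep_num n A + 2 = n"
  shows "\<exists>p q r c. r \<le> p \<and> n = p+q+r+2 \<and> (1 \<le> q \<or> c) \<and> graph_iso n A (binary_star p q r c)"
proof -
  have symA: "\<And>x y. A x y \<longleftrightarrow> A y x" using sg unfolding sgraph_def by blast
  have irr: "\<And>x. \<not> A x x" using sg unfolding sgraph_def by blast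
  have bnd: "\<And>x y. A x y \<Longrightarrow> x < n \<and> y < n" using sg unfolding sgraph_def by blast
  obtain S where S: "independent_set n A S" "card S = indep_num n A" using exists_S[OF sg] by blast
  have Ssub: "S \<subseteq> {..<n}" and Sind: "\<And>x y. x \<in> S \<Longrightarrow> y \<in> S \<Longrightarrow> \<not> A x y"
    using S(1) unfolding independent_set_def by auto
  have finS: "finite S" using Ssub finite_subset by blast
  have "card ({..<n} - S) = n - card S" using Ssub finS by (simp add: card_Diff_subset)
  hence "card ({..<n} - S) = 2" using S(2) ind by simp
  then obtain u v where uv: "{..<n} - S = {u,v}" "u \<noteq> v" unfolding card_2_iff by blast
  have uvn: "u < n" "v < n" "u \<notin> S" "v \<notin> S" using uv by auto
  have Sdef: "S = {..<n} - {u,v}" using uv Ssub by auto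
  have nb: "\<And>s. s \<in> S \<Longrightarrow> A s u \<or> A s v"
  proof -
    fix s assume s: "s \<in> S"
    have "s < n" using s Ssub by auto
    hence "A\<^sup>*\<^sup>* s u" using con uvn unfolding connected_graph_def by blast
    thus "A s u \<or> A s v"
    proof (cases rule: converse_rtranclpE)
      case base thus ?thesis using s uvn by simp
    next
      case (step y)
      have "y < n" using bnd[OF step(1)] by simp
      moreover have "y \<notin> S" using Sind[OF s] step(1) by blast
      ultimately have "y = u \<or> y = v" using Sdef by auto
      thus ?thesis using step(1) by auto
    qed
  qed
  have conn2: "A u v \<or> (\<exists>s\<in>S. A s u \<and> A s v)"
  proof (rule ccontr)
    assume H: "\<not> (A u v \<or> (\<exists>s\<in>S. A s u \<and> A s v))"
    let ?X = "{u} \<union> {s\<in>S. A s u}"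
    have cl: "\<And>y. A\<^sup>*\<^sup>* u y \<Longrightarrow> y \<in> ?X"
    proof -
      fix y assume "A\<^sup>*\<^sup>* u y"
      thus "y \<in> ?X"
      proof (induction rule: rtranclp_induct)
        case base thus ?case by simp
      next
        case (step y z)
        have zn: "z < n" using bnd[OF step(2)] by simp
        show ?case
        proof (cases "y = u")
          case True
          hence Auz: "A u z" using step(2) by simp
          have "z \<noteq> u" using Auz irr by auto
          moreover have "z \<noteq> v" using Auz H by auto
          ultimately have "z \<in> S" using zn Sdef by auto
          thus ?thesis using Auz symA by auto
        next
          case False
          hence yS: "y \<in> S" "A y u" using step(3) by auto
          have "z \<notin> S" using Sind[OF yS(1)] step(2) by blast
          hence "z = u \<or> z = v" using zn Sdef by auto
          moreover have "z \<noteq> v" using H yS step(2) by auto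
          ultimately show ?thesis by simp
        qed
      qed
    qed
    have "A\<^sup>*\<^sup>* u v" using con uvn unfolding connected_graph_def by blast
    hence "v \<in> ?X" by (rule cl)
    thus False using uvn uv(2) by auto
  qed
  define W where "W = {s\<in>S. A s u \<and> A s v}"
  define U where "U = {s\<in>S. A s u \<and> \<not> A s v}"
  define V where "V = {s\<in>S. \<not> A s u \<and> A s v}"
  have finW: "finite W" using finS unfolding W_def by simp
  have qc: "1 \<le> card W \<or> A u v"
  proof (cases "A u v")
    case False
    then obtain s where "s \<in> W" using conn2 unfolding W_def by blast
    hence "card W \<noteq> 0" using finW by auto
    thus ?thesis by simp
  qed simp
  show ?thesis
  proof (cases "card V \<le> card U")
    case True
    have "graph_iso n A (binary_star (card U) (card W) (card V) (A u v)) \<and> n = card U + card W + card V + 2"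
      using construct[OF sg uvn(1,2) uv(2) Sdef Sind nb] unfolding U_def W_def V_def .
    hence "card V \<le> card U \<and> n = card U + card W + card V + 2 \<and> (1 \<le> card W \<or> A u v) \<and> graph_iso n A (binary_star (card U) (card W) (card V) (A u v))"
      using True qc by auto
    thus ?thesis by blast
  next
    case False
    have Sdef': "S = {..<n} - {v,u}" using Sdef by auto
    have nb': "\<And>s. s \<in> S \<Longrightarrow> A s v \<or> A s u" using nb by blast
    have "graph_iso n A (binary_star (card {s\<in>S. A s v \<and> \<not> A s u}) (card {s\<in>S. A s v \<and> A s u}) (card {s\<in>S. \<not>A s v \<and> A s u}) (A v u))
     \<and> n = card {s\<in>S. A s v \<and> \<not> A s u} + card {s\<in>S. A s v \<and> A s u} + card {s\<in>S. \<not>A s v \<and> A s u} + 2"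
      by (rule construct[OF sg uvn(2,1) uv(2)[symmetric] Sdef' Sind nb'])
    moreover have "{s\<in>S. A s v \<and> \<not> A s u} = V" "{s\<in>S. A s v \<and> A s u} = W" "{s\<in>S. \<not>A s v \<and> A s u} = U"
      unfolding U_def V_def W_def by auto
    moreover have "A v u = A u v" using symA by blast
    ultimately have "graph_iso n A (binary_star (card V) (card W) (card U) (A u v)) \<and> n = card V + card W + card U + 2"
      by (elim conjE) simp
    hence "card U \<le> card V \<and> n = card V + card W + card U + 2 \<and> (1 \<le> card W \<or> A u v) \<and> graph_iso n A (binary_star (card V) (card W) (card U) (A u v))"
      using False qc by auto
    thus ?thesis by blast
  qed
qed

theorem mainTheorem8:
  fixes n :: nat and A :: "nat \<Rightarrow> nat \<Rightarrow> bool"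
  assumes "sgraph n A" and "connected_graph n A" and "indep_num n A + 2 = n"
  shows "lap_mult_closed n A 0 (real n - real (indep_num n A)) = indep_num n A \<longleftrightarrow>
    (\<exists>p q r. p \<ge> r \<and> n = p + q + r + 2 \<and>
      ((q \<ge> 1 \<and> p + q + r \<ge> 3 \<and> graph_iso n A (binary_star p q r False)) \<or>
       (p * r \<ge> 2 \<and> graph_iso n A (binary_star p 0 r True) \<and> q = 0) \<or>
       (q \<ge> 1 \<and> graph_iso n A (binary_star p q r True))))"
proof -
  have two: "real n - real (indep_num n A) = 2" using assms(3) by linarith
  have ind: "indep_num n A = n - 2" using assms(3) by simp
  let ?L = "lap_mult_closed n A 0 2 = n - 2"
  have "?L \<longleftrightarrow>
    (\<exists>p q r. p \<ge> r \<and> n = p + q + r + 2 \<and>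
      ((q \<ge> 1 \<and> p + q + r \<ge> 3 \<and> graph_iso n A (binary_star p q r False)) \<or>
       (p * r \<ge> 2 \<and> graph_iso n A (binary_star p 0 r True) \<and> q = 0) \<or>
       (q \<ge> 1 \<and> graph_iso n A (binary_star p q r True))))" (is "_ \<longleftrightarrow> ?R")
  proof
    assume L: ?L
    obtain p q r c where pqr: "r \<le> p" "n = p+q+r+2" "1 \<le> q \<or> c" "graph_iso n A (binary_star p q r c)"
      using graph_structure[OF assms] by blast
    have "lap_mult_closed n (binary_star p q r c) 0 2 = n - 2"
      using L iso_lmc[OF pqr(4)] by simp
    hence cond: "(\<not>c \<and> 1 \<le> q \<and> 3 \<le> p+q+r) \<or> (c \<and> q = 0 \<and> 2 \<le> p*r) \<or> (c \<and> 1 \<le> q)"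
      using bs_count[OF pqr(2) pqr(1) pqr(3)] by simp
    show ?R
    proof (rule exI[of _ p], rule exI[of _ q], rule exI[of _ r])
      show "r \<le> p \<and> n = p + q + r + 2 \<and>
        ((q \<ge> 1 \<and> p + q + r \<ge> 3 \<and> graph_iso n A (binary_star p q r False)) \<or>
         (p * r \<ge> 2 \<and> graph_iso n A (binary_star p 0 r True) \<and> q = 0) \<or>
         (q \<ge> 1 \<and> graph_iso n A (binary_star p q r True)))"
        using cond pqr by (cases c) auto
    qed
  next
    assume ?R
    then obtain p q r where pqr: "r \<le> p" "n = p + q + r + 2"
      and D: "(q \<ge> 1 \<and> p + q + r \<ge> 3 \<and> graph_iso n A (binary_star p q r False)) \<or>
       (p * r \<ge> 2 \<and> graph_iso n A (binary_star p 0 r True) \<and> q = 0) \<or>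
       (q \<ge> 1 \<and> graph_iso n A (binary_star p q r True))" by blast
    from D show ?L
    proof (elim disjE conjE)
      assume q: "q \<ge> 1" "p + q + r \<ge> 3" and iso: "graph_iso n A (binary_star p q r False)"
      have "lap_mult_closed n (binary_star p q r False) 0 2 = n - 2"
        using bs_count[OF pqr(2) pqr(1), of False] q by simp
      thus ?L using iso_lmc[OF iso] by simp
    next
      assume q: "p * r \<ge> 2" "q = 0" and iso: "graph_iso n A (binary_star p 0 r True)"
      have n': "n = p + 0 + r + 2" using pqr q by simp
      have "lap_mult_closed n (binary_star p 0 r True) 0 2 = n - 2"
        using bs_count[OF n' pqr(1), of True] q by simp
      thus ?L using iso_lmc[OF iso] by simp
    next
      assume q: "q \<ge> 1" and iso: "graph_iso n A (binary_star p q r True)"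
      have "lap_mult_closed n (binary_star p q r True) 0 2 = n - 2"
        using bs_count[OF pqr(2) pqr(1), of True] q by simp
      thus ?L using iso_lmc[OF iso] by simp
    qed
  qed
  moreover have two': "real n - real (n - 2) = 2" using assms(3) by auto
  ultimately show ?thesis unfolding ind two' by simp
qed

end
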